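(* Setting as in the context. (a) For $(\sigma,\tau)\in G$, one has $L(\sigma,\tau)=L$ if and only if $(\sigma,\tau)\in H$. (b) There exists a strict violation of $(M,N)$ if and only if there exists $(\sigma,\tau)\in G$ such that $L(\sigma,\tau)>L$ in the monomial order.
   Context: Let $K$ be a field and $\mathcal{Q}$ a bipartite quiver (every arrow goes from a source vertex to a sink vertex) with arrows $h_1,\dots,h_r$ and a nonnegative integer $m_\gamma$ attached to each vertex $\gamma$. For each $k$ let $X^{(k)}=[x^{(k)}_{ij}]$ be an $m_{{\rm t}(h_k)}\times m_{{\rm s}(h_k)}$ matrix of distinct independent variables (all variables distinct), in $K[X]$. For a sink $\alpha$, $A_\alpha$ is the horizontal concatenation $[X^{(r_1)}|\cdots|X^{(r_s)}]$ over the arrows $h_{r_1},\dots,h_{r_s}$ ($r_1<\dots<r_s$) with target $\alpha$; for a source $\beta$, $A_\beta$ is the vertical stacking of $X^{(r'_1)},\dots,X^{(r'_t)}$ over the arrows with source $\beta$ ($r'_1<\dots<r'_t$). Fix a lexicographic monomial order $>$ consistent with every $A_\gamma$ (in each $A_\gamma$ the variables strictly decrease from left to right along rows and from top to bottom along columns). Fix an arrow from a source $\gamma_2$ to a sink $\gamma_1$, let $A=A_{\gamma_1}$, $B=A_{\gamma_2}$, let $u,v$ be positive integers, let $M$ be a $u\times u$ minor of $A$ and $N$ a $v\times v$ minor of $B$. Let $L=\mathrm{lcm}(\mathrm{LM}(M),\mathrm{LM}(N))=x_{p_1}x_{p_2}\cdots x_{p_l}$ where $x_{p_1}>x_{p_2}>\dots>x_{p_l}$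 and $p_i=(\alpha_i,\beta_i,r_i)$ means $x_{p_i}=x^{(r_i)}_{\alpha_i\beta_i}$. Let $S_M=\{i: x_{p_i}\mid \mathrm{LM}(M)\}$ and $S_N=\{i: x_{p_i}\mid\mathrm{LM}(N)\}$. Let $\mathrm{Sym}(S_M)$ (resp. $\mathrm{Sym}(S_N)$) be the group of permutations of $\{1,\dots,l\}$ fixing every index outside $S_M$ (resp. $S_N$), and $G=\mathrm{Sym}(S_M)\times\mathrm{Sym}(S_N)$. For $(\sigma,\tau)\in G$ define the monomial $L(\sigma,\tau)=\prod_{i=1}^l x^{(r_i)}_{\alpha_{\sigma(i)},\beta_{\tau(i)}}$ (so $L(1,1)=L$). Let $H=\{(\pi,\pi)\}$ where $\pi$ ranges over permutations of $\{1,\dots,l\}$ fixing every index outside $S_M\cap S_N$ and satisfying $r_{\pi(i)}=r_i$ for all $i$. A strict violation of $(M,N)$ is a triple $(p_i,p_j,p_k)$ with distinct indices $i\in S_M$, $j\in S_N$, $k\in S_M\cap S_N$ such that $r_i=r_j=r_k$, $\alpha_i<\alpha_j<\alpha_k$ and $\beta_j<\beta_i<\beta_k$. *)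

theory Defs
  imports Main "HOL-Library.Poly_Mapping" "HOL-Combinatorics.Permutations"
begin

text \<open>Variables x^(k)_(a b) are encoded as triples (a, b, k): row a, column b of the
  matrix X^(k) (all indices 0-based; arrows are numbered 0..r-1 in the given order).\<close>

type_synonym var = "nat \<times> nat \<times> nat"
type_synonym mono = "var \<Rightarrow>\<^sub>0 nat"
type_synonym 'k mpoly = "mono \<Rightarrow>\<^sub>0 'k"

definition Var :: "var \<Rightarrow> 'k::comm_ring_1 mpoly" where
  "Var x = Poly_Mapping.single (Poly_Mapping.single x 1) 1"

definition valid_var :: "nat \<Rightarrow> (nat \<Rightarrow> 'v) \<Rightarrow> (nat \<Rightarrow> 'v) \<Rightarrow> ('v \<Rightarrow> nat) \<Rightarrow> var \<Rightarrow> bool" where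
  "valid_var r src tgt m x = (case x of (a, b, k) \<Rightarrow> k < r \<and> a < m (tgt k) \<and> b < m (src k))"

definition lex_gt :: "(var \<Rightarrow> var \<Rightarrow> bool) \<Rightarrow> mono \<Rightarrow> mono \<Rightarrow> bool" where
  "lex_gt gt mo1 mo2 = (\<exists>x. Poly_Mapping.lookup mo1 x > Poly_Mapping.lookup mo2 x \<and>
      (\<forall>y. gt y x \<longrightarrow> Poly_Mapping.lookup mo1 y = Poly_Mapping.lookup mo2 y))"

definition LM :: "(var \<Rightarrow> var \<Rightarrow> bool) \<Rightarrow> 'k::comm_ring_1 mpoly \<Rightarrow> mono" where
  "LM gt p = (THE mo. mo \<in> Poly_Mapping.keys p \<and> (\<forall>mo' \<in> Poly_Mapping.keys p. mo' \<noteq> mo \<longrightarrow> lex_gt gt mo mo'))"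

definition mono_lcm :: "mono \<Rightarrow> mono \<Rightarrow> mono" where
  "mono_lcm mo1 mo2 = Abs_poly_mapping (\<lambda>x. max (Poly_Mapping.lookup mo1 x) (Poly_Mapping.lookup mo2 x))"

definition det_var :: "nat \<Rightarrow> (nat \<Rightarrow> nat \<Rightarrow> var) \<Rightarrow> 'k::comm_ring_1 mpoly" where
  "det_var u ent = (\<Sum>\<pi> \<in> {\<pi>. \<pi> permutes {..<u}}.
      of_int (sign \<pi>) * (\<Prod>i<u. Var (ent i (\<pi> i))))"

text \<open>Lexicographic order on pairs (used for column indices (k, b) of A_alpha,
  k the arrow and b the column inside X^(k), and row indices (k, a) of A_beta).\<close>
definition pair_less :: "nat \<times> nat \<Rightarrow> nat \<times> nat \<Rightarrow> bool" where
  "pair_less p q = (fst p < fst q \<or> (fst p = fst q \<and> snd p < snd q))"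

text \<open>Sink alpha: A_alpha = [X^(k1) | ... | X^(ks)]; rows a < m alpha, columns (k, b)
  with t h_k = alpha, b < m (s h_k), ordered by pair_less; entry (a, (k, b)) is x^(k)_(a b).\<close>
definition sink_minor :: "nat \<Rightarrow> (nat \<Rightarrow> 'v) \<Rightarrow> (nat \<Rightarrow> 'v) \<Rightarrow> ('v \<Rightarrow> nat) \<Rightarrow> 'v
     \<Rightarrow> nat \<Rightarrow> nat list \<Rightarrow> (nat \<times> nat) list \<Rightarrow> 'k::comm_ring_1 mpoly \<Rightarrow> bool" where
  "sink_minor r src tgt m \<alpha> u R C M \<longleftrightarrow>
     length R = u \<and> length C = u \<and> sorted_wrt (<) R \<and> sorted_wrt pair_less C \<and>
     (\<forall>a \<in> set R. a < m \<alpha>) \<and>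
     (\<forall>(k, b) \<in> set C. k < r \<and> tgt k = \<alpha> \<and> b < m (src k)) \<and>
     M = det_var u (\<lambda>i j. (R ! i, snd (C ! j), fst (C ! j)))"

text \<open>Source beta: A_beta = vertical stacking of X^(k1), ..., X^(kt); rows (k, a) with
  s h_k = beta, a < m (t h_k), ordered by pair_less; columns b < m beta; entry ((k, a), b)
  is x^(k)_(a b).\<close>
definition source_minor :: "nat \<Rightarrow> (nat \<Rightarrow> 'v) \<Rightarrow> (nat \<Rightarrow> 'v) \<Rightarrow> ('v \<Rightarrow> nat) \<Rightarrow> 'v
     \<Rightarrow> nat \<Rightarrow> (nat \<times> nat) list \<Rightarrow> nat list \<Rightarrow> 'k::comm_ring_1 mpoly \<Rightarrow> bool" where
  "source_minor r src tgt m \<beta> v R C N \<longleftrightarrow>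
     length R = v \<and> length C = v \<and> sorted_wrt pair_less R \<and> sorted_wrt (<) C \<and>
     (\<forall>(k, a) \<in> set R. k < r \<and> src k = \<beta> \<and> a < m (tgt k)) \<and>
     (\<forall>b \<in> set C. b < m \<beta>) \<and>
     N = det_var v (\<lambda>i j. (snd (R ! i), C ! j, fst (R ! i)))"

text \<open>The lexicographic order is given by a strict total order gt on the variables,
  consistent with every A_gamma.\<close>
definition consistent_order :: "nat \<Rightarrow> (nat \<Rightarrow> 'v) \<Rightarrow> (nat \<Rightarrow> 'v) \<Rightarrow> ('v \<Rightarrow> nat)
     \<Rightarrow> (var \<Rightarrow> var \<Rightarrow> bool) \<Rightarrow> bool" where
  "consistent_order r src tgt m gt \<longleftrightarrow>
     (\<forall>x. \<not> gt x x) \<and>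
     (\<forall>x y z. gt x y \<longrightarrow> gt y z \<longrightarrow> gt x z) \<and>
     (\<forall>x y. valid_var r src tgt m x \<longrightarrow> valid_var r src tgt m y \<longrightarrow> x \<noteq> y \<longrightarrow> gt x y \<or> gt y x) \<and>
     \<comment> \<open>sink matrices: along rows\<close>
     (\<forall>a b k b' k'. valid_var r src tgt m (a, b, k) \<longrightarrow> valid_var r src tgt m (a, b', k') \<longrightarrow>
        tgt k = tgt k' \<longrightarrow> pair_less (k, b) (k', b') \<longrightarrow> gt (a, b, k) (a, b', k')) \<and>
     \<comment> \<open>sink matrices: along columns\<close>
     (\<forall>a a' b k. valid_var r src tgt m (a, b, k) \<longrightarrow> valid_var r src tgt m (a', b, k) \<longrightarrow>
        a < a' \<longrightarrow> gt (a, b, k) (a', b, k)) \<and>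
     \<comment> \<open>source matrices: along rows\<close>
     (\<forall>a b b' k. valid_var r src tgt m (a, b, k) \<longrightarrow> valid_var r src tgt m (a, b', k) \<longrightarrow>
        b < b' \<longrightarrow> gt (a, b, k) (a, b', k)) \<and>
     \<comment> \<open>source matrices: along columns\<close>
     (\<forall>a b k a' k'. valid_var r src tgt m (a, b, k) \<longrightarrow> valid_var r src tgt m (a', b, k') \<longrightarrow>
        src k = src k' \<longrightarrow> pair_less (k, a) (k', a') \<longrightarrow> gt (a, b, k) (a', b, k'))"

end

theory Submission
  imports Defs
begin


definition monoP :: "nat \<Rightarrow> (nat \<Rightarrow> nat \<Rightarrow> var) \<Rightarrow> (nat \<Rightarrow> nat) \<Rightarrow> mono" where
  "monoP u ent \<pi> = (\<Sum>i<u. Poly_Mapping.single (ent i (\<pi> i)) 1)"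

lemma prod_Var:
  assumes "finite A"
  shows "(\<Prod>i\<in>A. (Var (e i) :: 'k::comm_ring_1 mpoly)) =
         Poly_Mapping.single (\<Sum>i\<in>A. Poly_Mapping.single (e i) 1) 1"
  using assms
proof (induction A rule: finite_induct)
  case empty
  then show ?case by simp
next
  case (insert x F)
  then show ?case by (simp add: Var_def mult_single add.commute)
qed

lemma det_expand:
  "(det_var u ent :: 'k::comm_ring_1 mpoly) =
     (\<Sum>\<pi>\<in>{\<pi>. \<pi> permutes {..<u}}. Poly_Mapping.single (monoP u ent \<pi>) (of_int (sign \<pi>)))"
  unfolding det_var_def
proof (rule sum.cong[OF refl])
  fix \<pi> :: "nat \<Rightarrow> nat"
  have "(of_int (sign \<pi>) :: 'k mpoly) * (\<Prod>i<u. Var (ent i (\<pi> i)))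
     = Poly_Mapping.single 0 (of_int (sign \<pi>)) * Poly_Mapping.single (monoP u ent \<pi>) 1"
  proof -
    have "(of_int (sign \<pi>) :: 'k mpoly) = Poly_Mapping.single 0 (of_int (sign \<pi>))" by simp
    then show ?thesis by (simp add: prod_Var monoP_def)
  qed
  also have "\<dots> = Poly_Mapping.single (monoP u ent \<pi>) (of_int (sign \<pi>))"
    unfolding mult_single by simp
  finally show "(of_int (sign \<pi>) :: 'k mpoly) * (\<Prod>i<u. Var (ent i (\<pi> i))) =
     Poly_Mapping.single (monoP u ent \<pi>) (of_int (sign \<pi>))" .
qed

lemma lookup_monoP:
  "Poly_Mapping.lookup (monoP u ent \<pi>) y = (\<Sum>i<u. if ent i (\<pi> i) = y then 1 else 0)"
  unfolding monoP_def lookup_sum by (rule sum.cong) (auto simp: lookup_single when_def)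

lemma monoP_inj:
  assumes inj: "\<And>i j i' j'. i<u \<Longrightarrow> j<u \<Longrightarrow> i'<u \<Longrightarrow> j'<u \<Longrightarrow> ent i j = ent i' j' \<Longrightarrow> i = i' \<and> j = j'"
    and p1: "\<pi> permutes {..<u}" and p2: "\<pi>' permutes {..<u}"
    and eq: "monoP u ent \<pi> = monoP u ent \<pi>'"
  shows "\<pi> = \<pi>'"
proof
  fix i
  show "\<pi> i = \<pi>' i"
  proof (cases "i < u")
    case True
    have "(\<Sum>j<u. if ent j (\<pi> j) = ent i (\<pi> i) then 1 else 0::nat) \<noteq> 0"
      using True by (auto simp: sum_eq_0_iff)
    then have "(\<Sum>j<u. if ent j (\<pi>' j) = ent i (\<pi> i) then 1 else 0::nat) \<noteq> 0"
      using eq by (metis lookup_monoP)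
    then obtain j where j: "j < u" "ent j (\<pi>' j) = ent i (\<pi> i)"
      by (auto simp: sum_eq_0_iff split: if_splits)
    have "\<pi>' j < u" using p2 j(1) by (meson lessThan_iff permutes_in_image)
    moreover have "\<pi> i < u" using p1 True by (meson lessThan_iff permutes_in_image)
    ultimately show ?thesis using inj[OF j(1) _ True _ j(2)] by auto
  next
    case False
    then show ?thesis using p1 p2 by (simp add: permutes_def)
  qed
qed

lemma lookup_det:
  assumes inj: "\<And>i j i' j'. i<u \<Longrightarrow> j<u \<Longrightarrow> i'<u \<Longrightarrow> j'<u \<Longrightarrow> ent i j = ent i' j' \<Longrightarrow> i = i' \<and> j = j'"
  shows "Poly_Mapping.lookup (det_var u ent :: 'k::comm_ring_1 mpoly) mo =
     (if \<exists>\<pi>. \<pi> permutes {..<u} \<and> monoP u ent \<pi> = mo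
      then of_int (sign (THE \<pi>. \<pi> permutes {..<u} \<and> monoP u ent \<pi> = mo)) else 0)"
proof -
  have L: "Poly_Mapping.lookup (det_var u ent :: 'k mpoly) mo =
     (\<Sum>\<pi>\<in>{\<pi>. \<pi> permutes {..<u}}. if monoP u ent \<pi> = mo then of_int (sign \<pi>) else 0)"
    by (simp add: det_expand lookup_sum lookup_single when_def)
  show ?thesis
  proof (cases "\<exists>\<pi>. \<pi> permutes {..<u} \<and> monoP u ent \<pi> = mo")
    case True
    then obtain \<pi>0 where \<pi>0: "\<pi>0 permutes {..<u}" "monoP u ent \<pi>0 = mo" by blast
    have the: "(THE \<pi>. \<pi> permutes {..<u} \<and> monoP u ent \<pi> = mo) = \<pi>0"
      by (rule the_equality) (use \<pi>0 monoP_inj[OF inj] in auto)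
    have "(\<Sum>\<pi>\<in>{\<pi>. \<pi> permutes {..<u}}. if monoP u ent \<pi> = mo then of_int (sign \<pi>) else (0::'k))
        = (\<Sum>\<pi>\<in>{\<pi>. \<pi> permutes {..<u}}. if \<pi> = \<pi>0 then of_int (sign \<pi>) else 0)"
      apply (rule sum.cong[OF refl])
      using \<pi>0 monoP_inj[OF inj] by auto
    also have "\<dots> = of_int (sign \<pi>0)"
      using \<pi>0 by (simp add: sum.delta finite_permutations)
    finally show ?thesis using L True the by simp
  next
    case False
    then show ?thesis using L by (auto intro!: sum.neutral)
  qed
qed

lemma of_int_sign_nz: "(of_int (sign \<pi>) :: 'k::field) \<noteq> 0"
  by (cases \<pi> rule: sign_cases) simp_all

lemma keys_det:
  assumes inj: "\<And>i j i' j'. i<u \<Longrightarrow> j<u \<Longrightarrow> i'<u \<Longrightarrow> j'<u \<Longrightarrow> ent i j = ent i' j' \<Longrightarrow> i = i' \<and> j = j'"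
  shows "Poly_Mapping.keys (det_var u ent :: 'k::field mpoly) = monoP u ent ` {\<pi>. \<pi> permutes {..<u}}"
proof (intro set_eqI iffI)
  fix x assume "x \<in> Poly_Mapping.keys (det_var u ent :: 'k::field mpoly)"
  then have nz: "Poly_Mapping.lookup (det_var u ent :: 'k::field mpoly) x \<noteq> 0" by (simp add: in_keys_iff)
  have "\<not> (\<exists>\<pi>. \<pi> permutes {..<u} \<and> monoP u ent \<pi> = x) \<Longrightarrow> Poly_Mapping.lookup (det_var u ent :: 'k::field mpoly) x = 0"
    by (simp only: lookup_det[OF inj] if_False)
  with nz show "x \<in> monoP u ent ` {\<pi>. \<pi> permutes {..<u}}" by blast
next
  fix x assume "x \<in> monoP u ent ` {\<pi>. \<pi> permutes {..<u}}"
  then have ex: "\<exists>\<pi>. \<pi> permutes {..<u} \<and> monoP u ent \<pi> = x" by blast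
  have "Poly_Mapping.lookup (det_var u ent :: 'k::field mpoly) x =
     of_int (sign (THE \<pi>. \<pi> permutes {..<u} \<and> monoP u ent \<pi> = x))"
    by (simp only: lookup_det[OF inj] ex if_True)
  then show "x \<in> Poly_Mapping.keys (det_var u ent :: 'k::field mpoly)"
    by (simp add: in_keys_iff of_int_sign_nz)
qed

lemma lex_gt_asym:
  assumes irr: "\<And>x. \<not> gt x x"
    and tot: "\<And>x y. V x \<Longrightarrow> V y \<Longrightarrow> x \<noteq> y \<Longrightarrow> gt x y \<or> gt y x"
    and ka: "\<And>x. x \<in> Poly_Mapping.keys a \<Longrightarrow> V x"
    and kb: "\<And>x. x \<in> Poly_Mapping.keys b \<Longrightarrow> V x"
    and ab: "lex_gt gt a b" and ba: "lex_gt gt b a"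
  shows False
proof -
  obtain x where x: "Poly_Mapping.lookup a x > Poly_Mapping.lookup b x"
    "\<forall>y. gt y x \<longrightarrow> Poly_Mapping.lookup a y = Poly_Mapping.lookup b y"
    using ab unfolding lex_gt_def by blast
  obtain z where z: "Poly_Mapping.lookup b z > Poly_Mapping.lookup a z"
    "\<forall>y. gt y z \<longrightarrow> Poly_Mapping.lookup b y = Poly_Mapping.lookup a y"
    using ba unfolding lex_gt_def by blast
  have "V x" using x(1) ka by (simp add: in_keys_iff)
  have "V z" using z(1) kb by (simp add: in_keys_iff)
  consider "x = z" | "gt x z" | "gt z x" using tot[OF \<open>V x\<close> \<open>V z\<close>] by blast
  then show False
  proof cases
    case 1 then show ?thesis using x(1) z(1) by simp
  next
    case 2 then have "Poly_Mapping.lookup b x = Poly_Mapping.lookup a x" using z(2) by blast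
    then show ?thesis using x(1) by simp
  next
    case 3 then have "Poly_Mapping.lookup a z = Poly_Mapping.lookup b z" using x(2) by blast
    then show ?thesis using z(1) by simp
  qed
qed

lemma LM_det:
  assumes irr: "\<And>x. \<not> gt x x"
    and trans: "\<And>x y z. gt x y \<Longrightarrow> gt y z \<Longrightarrow> gt x z"
    and tot: "\<And>x y. V x \<Longrightarrow> V y \<Longrightarrow> x \<noteq> y \<Longrightarrow> gt x y \<or> gt y x"
    and val: "\<And>i j. i<u \<Longrightarrow> j<u \<Longrightarrow> V (ent i j)"
    and inj: "\<And>i j i' j'. i<u \<Longrightarrow> j<u \<Longrightarrow> i'<u \<Longrightarrow> j'<u \<Longrightarrow> ent i j = ent i' j' \<Longrightarrow> i = i' \<and> j = j'"
    and mon: "\<And>i j i' j'. i \<le> i' \<Longrightarrow> j \<le> j' \<Longrightarrow> i'<u \<Longrightarrow> j'<u \<Longrightarrow>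
                 ent i j = ent i' j' \<or> gt (ent i j) (ent i' j')"
  shows "LM gt (det_var u ent :: 'k::field mpoly) = monoP u ent id"
proof -
  let ?P = "{\<pi>. \<pi> permutes {..<u}}"
  have keysV: "V x" if "x \<in> Poly_Mapping.keys (monoP u ent \<pi>)" "\<pi> permutes {..<u}" for x \<pi>
  proof -
    from that(1) have "(\<Sum>i<u. if ent i (\<pi> i) = x then 1 else 0::nat) \<noteq> 0"
      by (simp add: in_keys_iff lookup_monoP)
    then obtain i where "i < u" "ent i (\<pi> i) = x" by (auto simp: sum_eq_0_iff split: if_splits)
    moreover have "\<pi> i < u" using that(2) \<open>i < u\<close> by (meson lessThan_iff permutes_in_image)
    ultimately show ?thesis using val by blast
  qed
  have key: "lex_gt gt (monoP u ent id) (monoP u ent \<pi>)" if PP: "\<pi> permutes {..<u}" and NI: "\<pi> \<noteq> id" for \<pi>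
  proof -
    have ex: "\<exists>i. \<pi> i \<noteq> i" using NI by auto
    define i0 where "i0 = (LEAST i. \<pi> i \<noteq> i)"
    have i0: "\<pi> i0 \<noteq> i0" unfolding i0_def by (rule LeastI_ex[OF ex])
    have below: "\<pi> i = i" if "i < i0" for i
      using not_less_Least[of i "\<lambda>i. \<pi> i \<noteq> i"] that unfolding i0_def by blast
    have "i0 < u" using i0 PP by (meson lessThan_iff permutes_not_in)
    have pge: "i0 \<le> \<pi> i" if "i0 \<le> i" for i
    proof (rule ccontr)
      assume "\<not> i0 \<le> \<pi> i"
      then have "\<pi> (\<pi> i) = \<pi> i" using below by simp
      then have "\<pi> i = i" using permutes_inj[OF PP] by (meson injD)
      with \<open>\<not> i0 \<le> \<pi> i\<close> \<open>i0 \<le> i\<close> show False by simp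
    qed
    define x where "x = ent i0 i0"
    have geq: "ent i j = x \<or> gt x (ent i j)" if "i0 \<le> i" "i0 \<le> j" "i < u" "j < u" for i j
      using mon[OF that] unfolding x_def by auto
    have "(\<Sum>i<u. if ent i (id i) = x then 1 else 0::nat) = (\<Sum>i<u. if i = i0 then 1 else 0)"
      apply (rule sum.cong[OF refl])
      using inj \<open>i0 < u\<close> unfolding x_def by auto
    also have "\<dots> = 1" using \<open>i0 < u\<close> by simp
    finally have lx1: "Poly_Mapping.lookup (monoP u ent id) x = 1" by (simp add: lookup_monoP)
    have "(\<Sum>i<u. if ent i (\<pi> i) = x then 1 else 0::nat) = 0"
    proof (rule sum.neutral, rule ballI)
      fix i assume "i \<in> {..<u}"
      have "\<pi> i < u" using PP \<open>i \<in> {..<u}\<close> by (meson lessThan_iff permutes_in_image)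
      then have "ent i (\<pi> i) \<noteq> x" using inj[of i "\<pi> i" i0 i0] \<open>i \<in> {..<u}\<close> \<open>i0 < u\<close> i0 unfolding x_def by auto
      then show "(if ent i (\<pi> i) = x then 1 else 0) = 0" by simp
    qed
    then have lx2: "Poly_Mapping.lookup (monoP u ent \<pi>) x = 0" by (simp add: lookup_monoP)
    have rest: "Poly_Mapping.lookup (monoP u ent id) y = Poly_Mapping.lookup (monoP u ent \<pi>) y"
      if "gt y x" for y
    proof -
      have "(if ent i (id i) = y then 1 else 0::nat) = (if ent i (\<pi> i) = y then 1 else 0)"
        if "i \<in> {..<u}" for i
      proof (cases "i < i0")
        case True then show ?thesis using below by simp
      next
        case False
        then have "i0 \<le> i" by simp
        have "\<pi> i < u" using \<open>\<pi> permutes {..<u}\<close> that by (meson lessThan_iff permutes_in_image)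
        have a: "ent i i \<noteq> y"
        proof
          assume "ent i i = y"
          moreover have "ent i i = x \<or> gt x (ent i i)" using geq[of i i] \<open>i0 \<le> i\<close> that by simp
          ultimately show False using \<open>gt y x\<close> irr[of x] trans[of x y x] by auto
        qed
        have b: "ent i (\<pi> i) \<noteq> y"
        proof
          assume "ent i (\<pi> i) = y"
          moreover have "ent i (\<pi> i) = x \<or> gt x (ent i (\<pi> i))"
            using geq[of i "\<pi> i"] \<open>i0 \<le> i\<close> pge[OF \<open>i0 \<le> i\<close>] that \<open>\<pi> i < u\<close> by simp
          ultimately show False using \<open>gt y x\<close> irr[of x] trans[of x y x] by auto
        qed
        show ?thesis using a b by simp
      qed
      then show ?thesis unfolding lookup_monoP by (intro sum.cong) auto
    qed
    show ?thesis unfolding lex_gt_def using lx1 lx2 rest by (intro exI[of _ x]) auto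
  qed
  have idP: "id permutes {..<u}" by (simp add: permutes_id)
  have P: "monoP u ent id \<in> Poly_Mapping.keys (det_var u ent :: 'k mpoly) \<and>
        (\<forall>mo' \<in> Poly_Mapping.keys (det_var u ent :: 'k mpoly). mo' \<noteq> monoP u ent id \<longrightarrow> lex_gt gt (monoP u ent id) mo')"
    using idP key by (auto simp: keys_det[OF inj])
  show ?thesis
    unfolding LM_def
  proof (rule the_equality)
    show "monoP u ent id \<in> Poly_Mapping.keys (det_var u ent :: 'k mpoly) \<and>
        (\<forall>mo' \<in> Poly_Mapping.keys (det_var u ent :: 'k mpoly). mo' \<noteq> monoP u ent id \<longrightarrow> lex_gt gt (monoP u ent id) mo')"
      by (rule P)
  next
    fix mo
    assume A: "mo \<in> Poly_Mapping.keys (det_var u ent :: 'k mpoly) \<and>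
        (\<forall>mo' \<in> Poly_Mapping.keys (det_var u ent :: 'k mpoly). mo' \<noteq> mo \<longrightarrow> lex_gt gt mo mo')"
    show "mo = monoP u ent id"
    proof (rule ccontr)
      assume ne: "mo \<noteq> monoP u ent id"
      obtain \<pi> where \<pi>: "\<pi> permutes {..<u}" "mo = monoP u ent \<pi>" using A by (auto simp: keys_det[OF inj])
      have "\<pi> \<noteq> id" using ne \<pi> by auto
      have g1: "lex_gt gt (monoP u ent id) mo" using key \<pi> \<open>\<pi> \<noteq> id\<close> by simp
      have g2: "lex_gt gt mo (monoP u ent id)" using A conjunct1[OF P] ne by simp
      have kmo: "\<And>x. x \<in> Poly_Mapping.keys mo \<Longrightarrow> V x" using keysV[of _ \<pi>] \<pi> by simp
      have kid: "\<And>x. x \<in> Poly_Mapping.keys (monoP u ent id) \<Longrightarrow> V x" using keysV[of _ id] idP by simp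
      show False by (rule lex_gt_asym[OF irr tot kmo kid g2 g1])
    qed
  qed
qed



locale ordl =
  fixes r :: nat and src tgt :: "nat \<Rightarrow> 'v" and m :: "'v \<Rightarrow> nat" and gt :: "var \<Rightarrow> var \<Rightarrow> bool"
  assumes order: "consistent_order r src tgt m gt"
begin

abbreviation V where "V \<equiv> valid_var r src tgt m"


lemma irr0: "\<forall>x. \<not> gt x x" using order unfolding consistent_order_def by (elim conjE) assumption
lemma trans0: "\<forall>x y z. gt x y \<longrightarrow> gt y z \<longrightarrow> gt x z" using order unfolding consistent_order_def by (elim conjE) assumption
lemma tot0: "\<forall>x y. V x \<longrightarrow> V y \<longrightarrow> x \<noteq> y \<longrightarrow> gt x y \<or> gt y x" using order unfolding consistent_order_def by (elim conjE) assumption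
lemma irr: "\<not> gt x x" using irr0 by blast
lemma trans: "gt x y \<Longrightarrow> gt y z \<Longrightarrow> gt x z" using trans0 by blast
lemma tot: "V x \<Longrightarrow> V y \<Longrightarrow> x \<noteq> y \<Longrightarrow> gt x y \<or> gt y x" using tot0 by blast
lemma asym: "gt x y \<Longrightarrow> \<not> gt y x" using irr trans by blast

lemma Vdef: "V (a, b, k) \<longleftrightarrow> k < r \<and> a < m (tgt k) \<and> b < m (src k)"
  by (simp add: valid_var_def)

lemma Tmono:
  assumes "V (a, b, k)" "V (a', b', k')" "tgt k = tgt k'" "a \<le> a'" "k < k' \<or> (k = k' \<and> b \<le> b')"
  shows "(a, b, k) = (a', b', k') \<or> gt (a, b, k) (a', b', k')"
proof -
  have Vw: "V (a, b', k')" using assms(1,2,3) by (simp add: Vdef)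
  have row: "\<forall>a b k b' k'. V (a, b, k) \<longrightarrow> V (a, b', k') \<longrightarrow> tgt k = tgt k' \<longrightarrow>
        pair_less (k, b) (k', b') \<longrightarrow> gt (a, b, k) (a, b', k')"
    using order unfolding consistent_order_def by (elim conjE) assumption
  have col: "\<forall>a a' b k. V (a, b, k) \<longrightarrow> V (a', b, k) \<longrightarrow> a < a' \<longrightarrow> gt (a, b, k) (a', b, k)"
    using order unfolding consistent_order_def by (elim conjE) assumption
  have 1: "(a, b, k) = (a, b', k') \<or> gt (a, b, k) (a, b', k')"
  proof (cases "k = k' \<and> b = b'")
    case True then show ?thesis by simp
  next
    case False
    then have "pair_less (k, b) (k', b')" using assms(5) by (auto simp: pair_less_def)
    then show ?thesis using row assms(1,3) Vw by blast
  qed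
  have 2: "(a, b', k') = (a', b', k') \<or> gt (a, b', k') (a', b', k')"
  proof (cases "a = a'")
    case True then show ?thesis by simp
  next
    case False
    then have "a < a'" using assms(4) by simp
    then show ?thesis using col Vw assms(2) by blast
  qed
  show ?thesis using 1 2 trans[of "(a, b, k)" "(a, b', k')" "(a', b', k')"] trans[of "(a, b, k)" "(a, b', k)" "(a', b', k')"] by auto
qed

lemma Smono:
  assumes "V (a, b, k)" "V (a', b', k')" "src k = src k'" "k < k' \<or> (k = k' \<and> a \<le> a')" "b \<le> b'"
  shows "(a, b, k) = (a', b', k') \<or> gt (a, b, k) (a', b', k')"
proof -
  have Vw: "V (a, b', k)" using assms(1,2,3) by (simp add: Vdef)
  have row: "\<forall>a b b' k. V (a, b, k) \<longrightarrow> V (a, b', k) \<longrightarrow> b < b' \<longrightarrow> gt (a, b, k) (a, b', k)"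
    using order unfolding consistent_order_def by (elim conjE) assumption
  have col: "\<forall>a b k a' k'. V (a, b, k) \<longrightarrow> V (a', b, k') \<longrightarrow>
        src k = src k' \<longrightarrow> pair_less (k, a) (k', a') \<longrightarrow> gt (a, b, k) (a', b, k')"
    using order unfolding consistent_order_def by (elim conjE) assumption
  have 1: "(a, b, k) = (a, b', k) \<or> gt (a, b, k) (a, b', k)"
  proof (cases "b = b'")
    case True then show ?thesis by simp
  next
    case False
    then have "b < b'" using assms(5) by simp
    then show ?thesis using row assms(1) Vw by blast
  qed
  have 2: "(a, b', k) = (a', b', k') \<or> gt (a, b', k) (a', b', k')"
  proof (cases "k = k' \<and> a = a'")
    case True then show ?thesis by simp
  next
    case False
    then have "pair_less (k, a) (k', a')" using assms(4) by (auto simp: pair_less_def)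
    then show ?thesis using col Vw assms(2,3) by blast
  qed
  show ?thesis using 1 2 trans[of "(a, b, k)" "(a, b', k')" "(a', b', k')"] trans[of "(a, b, k)" "(a, b', k)" "(a', b', k')"] by auto
qed

end

locale core = ordl r src tgt m gt
  for r :: nat and src tgt :: "nat \<Rightarrow> 'v" and m :: "'v \<Rightarrow> nat" and gt :: "var \<Rightarrow> var \<Rightarrow> bool" +
  fixes T S :: 'v and l :: nat and SM SN :: "nat set" and \<alpha> \<beta> rr :: "nat \<Rightarrow> nat"
  assumes sorted: "\<And>s t. s < t \<Longrightarrow> t < l \<Longrightarrow> gt (\<alpha> s, \<beta> s, rr s) (\<alpha> t, \<beta> t, rr t)"
    and SM_sub: "SM \<subseteq> {..<l}" and SN_sub: "SN \<subseteq> {..<l}"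
    and cover: "\<And>i. i < l \<Longrightarrow> i \<in> SM \<or> i \<in> SN"
    and SM_val: "\<And>i. i \<in> SM \<Longrightarrow> valid_var r src tgt m (\<alpha> i, \<beta> i, rr i) \<and> tgt (rr i) = T"
    and SN_val: "\<And>i. i \<in> SN \<Longrightarrow> valid_var r src tgt m (\<alpha> i, \<beta> i, rr i) \<and> src (rr i) = S"
    and SM_chain: "\<And>s t. s \<in> SM \<Longrightarrow> t \<in> SM \<Longrightarrow> s < t \<Longrightarrow>
                     \<alpha> s < \<alpha> t \<and> (rr s < rr t \<or> (rr s = rr t \<and> \<beta> s < \<beta> t))"
    and SN_chain: "\<And>s t. s \<in> SN \<Longrightarrow> t \<in> SN \<Longrightarrow> s < t \<Longrightarrow>
                     \<beta> s < \<beta> t \<and> (rr s < rr t \<or> (rr s = rr t \<and> \<alpha> s < \<alpha> t))"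
begin

definition p where "p i = (\<alpha> i, \<beta> i, rr i)"
definition q where "q \<sigma> \<tau> i = (\<alpha> (\<sigma> i), \<beta> (\<tau> i), rr i)"

lemma p_gt: "s < t \<Longrightarrow> t < l \<Longrightarrow> gt (p s) (p t)"
  using sorted by (simp add: p_def)

lemma p_inj: "s < l \<Longrightarrow> t < l \<Longrightarrow> p s = p t \<Longrightarrow> s = t"
  using p_gt[of s t] p_gt[of t s] irr by (cases s t rule: linorder_cases) auto

lemma SM_l: "i \<in> SM \<Longrightarrow> i < l" using SM_sub by auto
lemma SN_l: "i \<in> SN \<Longrightarrow> i < l" using SN_sub by auto

lemma Vp: "i < l \<Longrightarrow> V (p i)" using SM_val SN_val cover by (auto simp: p_def)

lemma SM_le: "s \<in> SM \<Longrightarrow> t \<in> SM \<Longrightarrow> s \<le> t \<Longrightarrow>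
     \<alpha> s \<le> \<alpha> t \<and> (rr s < rr t \<or> (rr s = rr t \<and> \<beta> s \<le> \<beta> t))"
  using SM_chain[of s t] by (cases "s = t") auto

lemma SN_le: "s \<in> SN \<Longrightarrow> t \<in> SN \<Longrightarrow> s \<le> t \<Longrightarrow>
     \<beta> s \<le> \<beta> t \<and> (rr s < rr t \<or> (rr s = rr t \<and> \<alpha> s \<le> \<alpha> t))"
  using SN_chain[of s t] by (cases "s = t") auto

lemma SM_a_inj: "s \<in> SM \<Longrightarrow> t \<in> SM \<Longrightarrow> \<alpha> s = \<alpha> t \<Longrightarrow> s = t"
  using SM_chain[of s t] SM_chain[of t s] by (cases s t rule: linorder_cases) auto

lemma SM_c_inj: "s \<in> SM \<Longrightarrow> t \<in> SM \<Longrightarrow> rr s = rr t \<Longrightarrow> \<beta> s = \<beta> t \<Longrightarrow> s = t"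
  using SM_chain[of s t] SM_chain[of t s] by (cases s t rule: linorder_cases) auto

lemma SN_b_inj: "s \<in> SN \<Longrightarrow> t \<in> SN \<Longrightarrow> \<beta> s = \<beta> t \<Longrightarrow> s = t"
  using SN_chain[of s t] SN_chain[of t s] by (cases s t rule: linorder_cases) auto

lemma SN_r_inj: "s \<in> SN \<Longrightarrow> t \<in> SN \<Longrightarrow> rr s = rr t \<Longrightarrow> \<alpha> s = \<alpha> t \<Longrightarrow> s = t"
  using SN_chain[of s t] SN_chain[of t s] by (cases s t rule: linorder_cases) auto

lemma SM_a_less: "s \<in> SM \<Longrightarrow> t \<in> SM \<Longrightarrow> \<alpha> s < \<alpha> t \<Longrightarrow> s < t"
  using SM_chain[of t s] by (cases s t rule: linorder_cases) auto

lemma SN_b_less: "s \<in> SN \<Longrightarrow> t \<in> SN \<Longrightarrow> \<beta> s < \<beta> t \<Longrightarrow> s < t"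
  using SN_chain[of t s] by (cases s t rule: linorder_cases) auto

lemma perm_in: "\<sigma> permutes A \<Longrightarrow> i \<in> A \<Longrightarrow> \<sigma> i \<in> A"
  by (simp add: permutes_in_image)
lemma perm_out: "\<sigma> permutes A \<Longrightarrow> i \<notin> A \<Longrightarrow> \<sigma> i = i"
  by (simp add: permutes_not_in)
lemma perm_inj: "\<sigma> permutes A \<Longrightarrow> \<sigma> x = \<sigma> y \<Longrightarrow> x = y"
  by (meson permutes_inj injD)

lemma perm_ge:
  fixes \<sigma> :: "nat \<Rightarrow> nat"
  assumes "\<sigma> permutes A" "\<forall>t<n. \<sigma> t = t" "n \<le> i"
  shows "n \<le> \<sigma> i"
proof (rule ccontr)
  assume "\<not> n \<le> \<sigma> i"
  then have "\<sigma> i < n" by simp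
  then have "\<sigma> (\<sigma> i) = \<sigma> i" using assms(2) by blast
  then have "\<sigma> i = i" using perm_inj[OF assms(1)] by blast
  then show False using \<open>\<not> n \<le> \<sigma> i\<close> assms(3) by simp
qed

lemma Vq:
  assumes s: "\<sigma> permutes SM" and t: "\<tau> permutes SN" and i: "i < l"
  shows "V (q \<sigma> \<tau> i)"
proof -
  have r1: "rr i < r" using Vp[OF i] by (simp add: p_def Vdef)
  have a1: "\<alpha> (\<sigma> i) < m (tgt (rr i))"
  proof (cases "i \<in> SM")
    case True
    then have "\<sigma> i \<in> SM" using perm_in[OF s] by simp
    then show ?thesis using SM_val[of "\<sigma> i"] SM_val[OF True] by (auto simp: Vdef)
  next
    case False
    then show ?thesis using perm_out[OF s False] Vp[OF i] by (simp add: p_def Vdef)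
  qed
  have b1: "\<beta> (\<tau> i) < m (src (rr i))"
  proof (cases "i \<in> SN")
    case True
    then have "\<tau> i \<in> SN" using perm_in[OF t] by simp
    then show ?thesis using SN_val[of "\<tau> i"] SN_val[OF True] by (auto simp: Vdef)
  next
    case False
    then show ?thesis using perm_out[OF t False] Vp[OF i] by (simp add: p_def Vdef)
  qed
  show ?thesis using r1 a1 b1 by (simp add: q_def Vdef)
qed

definition viol where
  "viol = (\<exists>i j k. i \<in> SM \<and> j \<in> SN \<and> k \<in> SM \<inter> SN \<and> i \<noteq> j \<and> i \<noteq> k \<and> j \<noteq> k \<and>
             rr i = rr j \<and> rr j = rr k \<and> \<alpha> i < \<alpha> j \<and> \<alpha> j < \<alpha> k \<and> \<beta> j < \<beta> i \<and> \<beta> i < \<beta> k)"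

end



context core
begin

lemma bound:
  assumes nv: "\<not> viol" and s: "\<sigma> permutes SM" and t: "\<tau> permutes SN"
    and fx: "\<forall>t<n. \<sigma> t = t \<and> \<tau> t = t" and ni: "n \<le> i" and il: "i < l"
  shows "gt (p n) (q \<sigma> \<tau> i) \<or> (q \<sigma> \<tau> i = p n \<and> (\<sigma> i = n \<or> \<sigma> n = n) \<and> (\<tau> i = n \<or> \<tau> n = n))"
proof -
  let ?P = "(\<alpha> n, \<beta> n, rr n)"
  let ?Q = "(\<alpha> (\<sigma> i), \<beta> (\<tau> i), rr i)"
  let ?E = "(\<sigma> i = n \<or> \<sigma> n = n) \<and> (\<tau> i = n \<or> \<tau> n = n)"
  have nl: "n < l" using ni il by simp
  have fs: "\<forall>t<n. \<sigma> t = t" and ft: "\<forall>t<n. \<tau> t = t" using fx by auto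
  have sge: "n \<le> \<sigma> i" using perm_ge[OF s fs ni] .
  have tge: "n \<le> \<tau> i" using perm_ge[OF t ft ni] .
  have VP: "V ?P" using Vp[OF nl] by (simp add: p_def)
  have VQ: "V ?Q" using Vq[OF s t il] by (simp add: q_def)
  have fin: "gt (p n) (q \<sigma> \<tau> i) \<or> (q \<sigma> \<tau> i = p n \<and> ?E)"
    if ge: "?P = ?Q \<or> gt ?P ?Q" and eqc: "?P = ?Q \<Longrightarrow> ?E"
    using ge eqc by (auto simp: p_def q_def)
  have notabove: "False" if "n < j" "j < l" "p j = p n \<or> gt (p j) (p n)" for j
    using that p_gt[of n j] p_inj[of j n] nl asym by auto
  have below: "gt (p n) x" if "n < j" "j < l" "p j = x \<or> gt (p j) x" for j x
    using that p_gt[of n j] trans[of "p n" "p j" x] by auto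
  consider (A) "n \<in> SM" "n \<notin> SN" | (B) "n \<notin> SM" "n \<in> SN" | (C) "n \<in> SM" "n \<in> SN"
    using cover[OF nl] by blast
  then show ?thesis
  proof cases
    case A
    show ?thesis
    proof (cases "i \<in> SM")
      case iM: True
      have siM: "\<sigma> i \<in> SM" using perm_in[OF s iM] .
      have a_le: "\<alpha> n \<le> \<alpha> (\<sigma> i)" using SM_le[OF A(1) siM sge] by simp
      have tg: "tgt (rr n) = tgt (rr i)" using SM_val[OF A(1)] SM_val[OF iM] by simp
      show ?thesis
      proof (cases "i \<in> SN")
        case False
        have ti: "\<tau> i = i" using perm_out[OF t False] .
        have c_le: "rr n < rr i \<or> (rr n = rr i \<and> \<beta> n \<le> \<beta> i)" using SM_le[OF A(1) iM ni] by simp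
        show ?thesis
        proof (rule fin)
          show "?P = ?Q \<or> gt ?P ?Q" using Tmono[OF VP VQ tg a_le] c_le ti by simp
          assume "?P = ?Q"
          then have "\<sigma> i = n" using SM_a_inj[OF siM A(1)] by simp
          moreover have "\<tau> n = n" using perm_out[OF t A(2)] .
          ultimately show ?E by simp
        qed
      next
        case iN: True
        have "i \<noteq> n" using iN A(2) by auto
        then have nlti: "n < i" using ni by simp
        have tiN: "\<tau> i \<in> SN" using perm_in[OF t iN] .
        show ?thesis
        proof (cases "rr n < rr i \<or> (rr n = rr i \<and> \<beta> n \<le> \<beta> (\<tau> i))")
          case True
          show ?thesis
          proof (rule fin)
            show "?P = ?Q \<or> gt ?P ?Q" using Tmono[OF VP VQ tg a_le True] .
            assume "?P = ?Q"
            then have "\<sigma> i = n" using SM_a_inj[OF siM A(1)] by simp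
            moreover have "\<tau> n = n" using perm_out[OF t A(2)] .
            ultimately show ?E by simp
          qed
        next
          case False
          have ch: "\<alpha> n < \<alpha> i \<and> (rr n < rr i \<or> (rr n = rr i \<and> \<beta> n < \<beta> i))"
            using SM_chain[OF A(1) iM nlti] .
          have rin: "rr i = rr n" and b1: "\<beta> (\<tau> i) < \<beta> n" and b2: "\<beta> n < \<beta> i"
            using False ch by auto
          define j where "j = \<tau> i"
          have jN: "j \<in> SN" using tiN j_def by simp
          have "j \<noteq> n" using jN A(2) by auto
          then have nj: "n < j" using tge j_def by simp
          have jl: "j < l" using SN_l[OF jN] .
          have "j < i" using SN_b_less[OF jN iN] b1 b2 j_def by simp
          have chj: "\<beta> j < \<beta> i \<and> (rr j < rr i \<or> (rr j = rr i \<and> \<alpha> j < \<alpha> i))"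
            using SN_chain[OF jN iN \<open>j < i\<close>] .
          have key: "rr j = rr n \<and> \<alpha> n < \<alpha> j"
          proof (rule ccontr)
            assume nk: "\<not> (rr j = rr n \<and> \<alpha> n < \<alpha> j)"
            have sr: "src (rr j) = src (rr n)" using SN_val[OF jN] SN_val[OF iN] rin by simp
            have c: "rr j < rr n \<or> (rr j = rr n \<and> \<alpha> j \<le> \<alpha> n)" using nk chj rin by auto
            have b: "\<beta> j \<le> \<beta> n" using b1 j_def by simp
            have Vj: "V (\<alpha> j, \<beta> j, rr j)" using SN_val[OF jN] by simp
            have "(\<alpha> j, \<beta> j, rr j) = ?P \<or> gt (\<alpha> j, \<beta> j, rr j) ?P"
              using Smono[OF Vj VP sr c b] .
            then show False using notabove[OF nj jl] by (simp add: p_def)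
          qed
          have "viol" unfolding viol_def
            apply (rule exI[of _ n], rule exI[of _ j], rule exI[of _ i])
            using A iM iN jN \<open>j \<noteq> n\<close> \<open>j < i\<close> nlti key chj rin b1 b2 j_def by auto
          then show ?thesis using nv by simp
        qed
      qed
    next
      case iM: False
      then have iN: "i \<in> SN" using cover il by blast
      have si: "\<sigma> i = i" using perm_out[OF s iM] .
      have "i \<noteq> n" using iM A(1) by auto
      then have nlti: "n < i" using ni by simp
      have tiN: "\<tau> i \<in> SN" using perm_in[OF t iN] .
      have "\<tau> i \<noteq> n" using tiN A(2) by auto
      then have ntl: "n < \<tau> i" using tge by simp
      define j where "j = min i (\<tau> i)"
      have jN: "j \<in> SN" using iN tiN j_def by (simp add: min_def)
      have nj: "n < j" using nlti ntl j_def by simp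
      have "j \<le> i" "j \<le> \<tau> i" using j_def by simp_all
      have c: "rr j < rr i \<or> (rr j = rr i \<and> \<alpha> j \<le> \<alpha> i)" using SN_le[OF jN iN \<open>j \<le> i\<close>] by simp
      have b: "\<beta> j \<le> \<beta> (\<tau> i)" using SN_le[OF jN tiN \<open>j \<le> \<tau> i\<close>] by simp
      have sr: "src (rr j) = src (rr i)" using SN_val[OF jN] SN_val[OF iN] by simp
      have Vj: "V (\<alpha> j, \<beta> j, rr j)" using SN_val[OF jN] by simp
      have "(\<alpha> j, \<beta> j, rr j) = ?Q \<or> gt (\<alpha> j, \<beta> j, rr j) ?Q"
        using Smono[OF Vj VQ sr _ b] c si by simp
      then have "gt (p n) (q \<sigma> \<tau> i)" using below[OF nj SN_l[OF jN]] by (simp add: p_def q_def)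
      then show ?thesis by simp
    qed
  next
    case B
    show ?thesis
    proof (cases "i \<in> SN")
      case iN: True
      have tiN: "\<tau> i \<in> SN" using perm_in[OF t iN] .
      have b_le: "\<beta> n \<le> \<beta> (\<tau> i)" using SN_le[OF B(2) tiN tge] by simp
      have sr: "src (rr n) = src (rr i)" using SN_val[OF B(2)] SN_val[OF iN] by simp
      show ?thesis
      proof (cases "i \<in> SM")
        case False
        have si: "\<sigma> i = i" using perm_out[OF s False] .
        have r_le: "rr n < rr i \<or> (rr n = rr i \<and> \<alpha> n \<le> \<alpha> i)" using SN_le[OF B(2) iN ni] by simp
        show ?thesis
        proof (rule fin)
          show "?P = ?Q \<or> gt ?P ?Q" using Smono[OF VP VQ sr _ b_le] r_le si by simp
          assume "?P = ?Q"
          then have "\<tau> i = n" using SN_b_inj[OF tiN B(2)] by simp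
          moreover have "\<sigma> n = n" using perm_out[OF s B(1)] .
          ultimately show ?E by simp
        qed
      next
        case iM: True
        have "i \<noteq> n" using iM B(1) by auto
        then have nlti: "n < i" using ni by simp
        have siM: "\<sigma> i \<in> SM" using perm_in[OF s iM] .
        show ?thesis
        proof (cases "rr n < rr i \<or> (rr n = rr i \<and> \<alpha> n \<le> \<alpha> (\<sigma> i))")
          case True
          show ?thesis
          proof (rule fin)
            show "?P = ?Q \<or> gt ?P ?Q" using Smono[OF VP VQ sr True b_le] .
            assume "?P = ?Q"
            then have "\<tau> i = n" using SN_b_inj[OF tiN B(2)] by simp
            moreover have "\<sigma> n = n" using perm_out[OF s B(1)] .
            ultimately show ?E by simp
          qed
        next
          case False
          have ch: "\<beta> n < \<beta> i \<and> (rr n < rr i \<or> (rr n = rr i \<and> \<alpha> n < \<alpha> i))"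
            using SN_chain[OF B(2) iN nlti] .
          have rin: "rr i = rr n" and a1: "\<alpha> (\<sigma> i) < \<alpha> n" and a2: "\<alpha> n < \<alpha> i"
            using False ch by auto
          define j where "j = \<sigma> i"
          have jM: "j \<in> SM" using siM j_def by simp
          have "j \<noteq> n" using jM B(1) by auto
          then have nj: "n < j" using sge j_def by simp
          have jl: "j < l" using SM_l[OF jM] .
          have "j < i" using SM_a_less[OF jM iM] a1 a2 j_def by simp
          have chj: "\<alpha> j < \<alpha> i \<and> (rr j < rr i \<or> (rr j = rr i \<and> \<beta> j < \<beta> i))"
            using SM_chain[OF jM iM \<open>j < i\<close>] .
          have key: "rr j = rr n \<and> \<beta> n < \<beta> j"
          proof (rule ccontr)
            assume nk: "\<not> (rr j = rr n \<and> \<beta> n < \<beta> j)"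
            have tg: "tgt (rr j) = tgt (rr n)" using SM_val[OF jM] SM_val[OF iM] rin by simp
            have c: "rr j < rr n \<or> (rr j = rr n \<and> \<beta> j \<le> \<beta> n)" using nk chj rin by auto
            have a: "\<alpha> j \<le> \<alpha> n" using a1 j_def by simp
            have Vj: "V (\<alpha> j, \<beta> j, rr j)" using SM_val[OF jM] by simp
            have "(\<alpha> j, \<beta> j, rr j) = ?P \<or> gt (\<alpha> j, \<beta> j, rr j) ?P"
              using Tmono[OF Vj VP tg a c] .
            then show False using notabove[OF nj jl] by (simp add: p_def)
          qed
          have "viol" unfolding viol_def
            apply (rule exI[of _ j], rule exI[of _ n], rule exI[of _ i])
            using B iM iN jM \<open>j \<noteq> n\<close> \<open>j < i\<close> nlti key chj rin a1 a2 j_def by auto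
          then show ?thesis using nv by simp
        qed
      qed
    next
      case iN: False
      then have iM: "i \<in> SM" using cover il by blast
      have ti: "\<tau> i = i" using perm_out[OF t iN] .
      have "i \<noteq> n" using iN B(2) by auto
      then have nlti: "n < i" using ni by simp
      have siM: "\<sigma> i \<in> SM" using perm_in[OF s iM] .
      have "\<sigma> i \<noteq> n" using siM B(1) by auto
      then have nsl: "n < \<sigma> i" using sge by simp
      define j where "j = min i (\<sigma> i)"
      have jM: "j \<in> SM" using iM siM j_def by (simp add: min_def)
      have nj: "n < j" using nlti nsl j_def by simp
      have "j \<le> i" "j \<le> \<sigma> i" using j_def by simp_all
      have c: "rr j < rr i \<or> (rr j = rr i \<and> \<beta> j \<le> \<beta> i)" using SM_le[OF jM iM \<open>j \<le> i\<close>] by simp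
      have a: "\<alpha> j \<le> \<alpha> (\<sigma> i)" using SM_le[OF jM siM \<open>j \<le> \<sigma> i\<close>] by simp
      have tg: "tgt (rr j) = tgt (rr i)" using SM_val[OF jM] SM_val[OF iM] by simp
      have Vj: "V (\<alpha> j, \<beta> j, rr j)" using SM_val[OF jM] by simp
      have "(\<alpha> j, \<beta> j, rr j) = ?Q \<or> gt (\<alpha> j, \<beta> j, rr j) ?Q"
        using Tmono[OF Vj VQ tg a] c ti by simp
      then have "gt (p n) (q \<sigma> \<tau> i)" using below[OF nj SM_l[OF jM]] by (simp add: p_def q_def)
      then show ?thesis by simp
    qed
  next
    case C
    show ?thesis
    proof (cases "i \<in> SM")
      case iM: True
      have siM: "\<sigma> i \<in> SM" using perm_in[OF s iM] .
      have a_le: "\<alpha> n \<le> \<alpha> (\<sigma> i)" using SM_le[OF C(1) siM sge] by simp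
      have tg: "tgt (rr n) = tgt (rr i)" using SM_val[OF C(1)] SM_val[OF iM] by simp
      have c0: "rr n < rr i \<or> (rr n = rr i \<and> \<beta> n \<le> \<beta> i)" using SM_le[OF C(1) iM ni] by simp
      show ?thesis
      proof (cases "i \<in> SN")
        case iN: True
        have tiN: "\<tau> i \<in> SN" using perm_in[OF t iN] .
        have b_le: "\<beta> n \<le> \<beta> (\<tau> i)" using SN_le[OF C(2) tiN tge] by simp
        have c: "rr n < rr i \<or> (rr n = rr i \<and> \<beta> n \<le> \<beta> (\<tau> i))" using c0 b_le by auto
        show ?thesis
        proof (rule fin)
          show "?P = ?Q \<or> gt ?P ?Q" using Tmono[OF VP VQ tg a_le c] .
          assume eq: "?P = ?Q"
          then have "\<sigma> i = n" using SM_a_inj[OF siM C(1)] by simp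
          moreover have "\<tau> i = n" using eq SN_b_inj[OF tiN C(2)] by simp
          ultimately show ?E by simp
        qed
      next
        case iN: False
        have ti: "\<tau> i = i" using perm_out[OF t iN] .
        show ?thesis
        proof (rule fin)
          show "?P = ?Q \<or> gt ?P ?Q" using Tmono[OF VP VQ tg a_le] c0 ti by simp
          assume eq: "?P = ?Q"
          then have "i = n" using SM_c_inj[OF iM C(1)] ti by simp
          then show ?E using iN C(2) by simp
        qed
      qed
    next
      case iM: False
      then have iN: "i \<in> SN" using cover il by blast
      have si: "\<sigma> i = i" using perm_out[OF s iM] .
      have tiN: "\<tau> i \<in> SN" using perm_in[OF t iN] .
      have b_le: "\<beta> n \<le> \<beta> (\<tau> i)" using SN_le[OF C(2) tiN tge] by simp
      have sr: "src (rr n) = src (rr i)" using SN_val[OF C(2)] SN_val[OF iN] by simp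
      have r_le: "rr n < rr i \<or> (rr n = rr i \<and> \<alpha> n \<le> \<alpha> i)" using SN_le[OF C(2) iN ni] by simp
      show ?thesis
      proof (rule fin)
        show "?P = ?Q \<or> gt ?P ?Q" using Smono[OF VP VQ sr _ b_le] r_le si by simp
        assume eq: "?P = ?Q"
        then have "i = n" using SN_r_inj[OF iN C(2)] si by simp
        then show ?E using iM C(1) by simp
      qed
    qed
  qed
qed

lemma swap:
  assumes s: "\<sigma> permutes SM" and t: "\<tau> permutes SN" and nl: "n < l" and il: "i < l"
    and eq: "q \<sigma> \<tau> i = p n" and cs: "\<sigma> i = n \<or> \<sigma> n = n" and ct: "\<tau> i = n \<or> \<tau> n = n"
  defines "\<sigma>' \<equiv> (if \<sigma> i = n then \<sigma> \<circ> Transposition.transpose n i else \<sigma>)"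
    and "\<tau>' \<equiv> (if \<tau> i = n then \<tau> \<circ> Transposition.transpose n i else \<tau>)"
  shows "\<sigma>' permutes SM \<and> \<tau>' permutes SN \<and> \<sigma>' n = n \<and> \<tau>' n = n \<and>
    (\<forall>x. x \<noteq> n \<longrightarrow> x \<noteq> i \<longrightarrow> \<sigma>' x = \<sigma> x \<and> \<tau>' x = \<tau> x) \<and>
    (\<Sum>x<l. Poly_Mapping.single (q \<sigma>' \<tau>' x) (1::nat)) = (\<Sum>x<l. Poly_Mapping.single (q \<sigma> \<tau> x) 1)"
proof -
  have eqs: "\<alpha> (\<sigma> i) = \<alpha> n" "\<beta> (\<tau> i) = \<beta> n" "rr i = rr n" using eq by (auto simp: p_def q_def)
  have sp: "\<sigma>' permutes SM"
  proof (cases "\<sigma> i = n \<and> i \<noteq> n")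
    case True
    then have iM: "i \<in> SM" using perm_out[OF s, of i] by auto
    then have nM: "n \<in> SM" using perm_in[OF s iM] True by simp
    show ?thesis using True permutes_compose[OF permutes_swap_id[OF nM iM] s] unfolding \<sigma>'_def by simp
  next
    case False
    then show ?thesis using s unfolding \<sigma>'_def by auto
  qed
  have tp: "\<tau>' permutes SN"
  proof (cases "\<tau> i = n \<and> i \<noteq> n")
    case True
    then have iN: "i \<in> SN" using perm_out[OF t, of i] by auto
    then have nN: "n \<in> SN" using perm_in[OF t iN] True by simp
    show ?thesis using True permutes_compose[OF permutes_swap_id[OF nN iN] t] unfolding \<tau>'_def by simp
  next
    case False
    then show ?thesis using t unfolding \<tau>'_def by auto
  qed
  have sn: "\<sigma>' n = n" using cs unfolding \<sigma>'_def by auto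
  have tn: "\<tau>' n = n" using ct unfolding \<tau>'_def by auto
  have oth: "\<forall>x. x \<noteq> n \<longrightarrow> x \<noteq> i \<longrightarrow> \<sigma>' x = \<sigma> x \<and> \<tau>' x = \<tau> x"
    unfolding \<sigma>'_def \<tau>'_def by auto
  have si: "\<alpha> (\<sigma>' i) = \<alpha> (\<sigma> n)" using cs eqs unfolding \<sigma>'_def by auto
  have ti: "\<beta> (\<tau>' i) = \<beta> (\<tau> n)" using ct eqs unfolding \<tau>'_def by auto
  have comp: "q \<sigma>' \<tau>' x = q \<sigma> \<tau> (Transposition.transpose n i x)" for x
  proof -
    consider "x = n" | "x \<noteq> n" "x = i" | "x \<noteq> n" "x \<noteq> i" by blast
    then show ?thesis
    proof cases
      case 1 then show ?thesis using sn tn eq by (simp add: q_def p_def)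
    next
      case 2 then show ?thesis using si ti eqs by (simp add: q_def)
    next
      case 3 then show ?thesis using oth by (simp add: q_def)
    qed
  qed
  have tperm: "Transposition.transpose n i permutes {..<l}" by (rule permutes_swap_id) (use nl il in auto)
  have "(\<Sum>x<l. Poly_Mapping.single (q \<sigma> \<tau> x) (1::nat)) =
        (\<Sum>x<l. Poly_Mapping.single (q \<sigma> \<tau> (Transposition.transpose n i x)) 1)"
    using sum.permute[OF tperm, of "\<lambda>x. Poly_Mapping.single (q \<sigma> \<tau> x) (1::nat)"] by (simp add: comp_def)
  also have "\<dots> = (\<Sum>x<l. Poly_Mapping.single (q \<sigma>' \<tau>' x) 1)" by (simp add: comp)
  finally show ?thesis using sp tp sn tn oth by simp
qed

end



context core
begin

definition Lm where "Lm \<sigma> \<tau> = (\<Sum>x<l. Poly_Mapping.single (q \<sigma> \<tau> x) (1::nat))"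
definition LL where "LL = (\<Sum>x<l. Poly_Mapping.single (p x) (1::nat))"

lemma lookup_Lm: "Poly_Mapping.lookup (Lm \<sigma> \<tau>) y = (\<Sum>x<l. if q \<sigma> \<tau> x = y then 1 else 0)"
  unfolding Lm_def lookup_sum by (rule sum.cong) (auto simp: lookup_single when_def)

lemma lookup_LL: "Poly_Mapping.lookup LL y = (\<Sum>x<l. if p x = y then 1 else 0)"
  unfolding LL_def lookup_sum by (rule sum.cong) (auto simp: lookup_single when_def)

lemma keys_Lm: "\<sigma> permutes SM \<Longrightarrow> \<tau> permutes SN \<Longrightarrow> y \<in> Poly_Mapping.keys (Lm \<sigma> \<tau>) \<Longrightarrow> V y"
  unfolding in_keys_iff lookup_Lm using Vq by (auto simp: sum_eq_0_iff split: if_splits)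

lemma keys_LL: "y \<in> Poly_Mapping.keys LL \<Longrightarrow> V y"
  unfolding in_keys_iff lookup_LL using Vp by (auto simp: sum_eq_0_iff split: if_splits)

lemma Lm_id: "Lm id id = LL"
  unfolding Lm_def LL_def by (simp add: p_def q_def)

lemma lex_asym_Lm:
  assumes "\<sigma> permutes SM" "\<tau> permutes SN" "\<sigma>' permutes SM" "\<tau>' permutes SN"
    "lex_gt gt (Lm \<sigma> \<tau>) (Lm \<sigma>' \<tau>')" "lex_gt gt (Lm \<sigma>' \<tau>') (Lm \<sigma> \<tau>)"
  shows False
  using lex_gt_asym[of gt V "Lm \<sigma> \<tau>" "Lm \<sigma>' \<tau>'"] irr tot keys_Lm assms by blast

lemma ge_ne: "gt y x \<Longrightarrow> x = v \<or> gt x v \<Longrightarrow> v \<noteq> y"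
  using irr trans by blast

lemma thmB_rev:
  assumes s: "\<sigma> permutes SM" and t: "\<tau> permutes SN" and g: "lex_gt gt (Lm \<sigma> \<tau>) LL"
  shows viol
proof (rule ccontr)
  assume nv: "\<not> viol"
  have idS: "id permutes SM" "id permutes SN" by (simp_all add: permutes_id)
  have main: "n \<le> l \<Longrightarrow> \<exists>\<sigma>' \<tau>'. \<sigma>' permutes SM \<and> \<tau>' permutes SN \<and> Lm \<sigma>' \<tau>' = Lm \<sigma> \<tau> \<and>
                  (\<forall>t<n. \<sigma>' t = t \<and> \<tau>' t = t)" for n
  proof (induction n)
    case 0
    then show ?case using s t by blast
  next
    case (Suc n)
    then have nl: "n < l" by simp
    obtain \<sigma>1 \<tau>1 where s1: "\<sigma>1 permutes SM" and t1: "\<tau>1 permutes SN" and L1: "Lm \<sigma>1 \<tau>1 = Lm \<sigma> \<tau>"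
      and f1: "\<forall>t<n. \<sigma>1 t = t \<and> \<tau>1 t = t"
      using Suc by auto
    have qp: "q \<sigma>1 \<tau>1 x = p x" if "x < n" for x using f1 that by (simp add: p_def q_def)
    have "\<exists>i. n \<le> i \<and> i < l \<and> q \<sigma>1 \<tau>1 i = p n"
    proof (rule ccontr)
      assume none: "\<not> (\<exists>i. n \<le> i \<and> i < l \<and> q \<sigma>1 \<tau>1 i = p n)"
      have below: "gt (p n) (q \<sigma>1 \<tau>1 i)" if "n \<le> i" "i < l" for i
        using bound[OF nv s1 t1 f1 that] none that by blast
      have "lex_gt gt LL (Lm \<sigma>1 \<tau>1)"
        unfolding lex_gt_def
      proof (intro exI[of _ "p n"] conjI allI impI)
        have "(\<Sum>x<l. if p x = p n then 1 else 0::nat) = (\<Sum>x<l. if x = n then 1 else 0)"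
          by (rule sum.cong) (use p_inj nl in auto)
        also have "\<dots> = 1" using nl by simp
        finally have a: "Poly_Mapping.lookup LL (p n) = 1" by (simp add: lookup_LL)
        have "(\<Sum>x<l. if q \<sigma>1 \<tau>1 x = p n then 1 else 0::nat) = 0"
        proof (rule sum.neutral, rule ballI)
          fix x assume "x \<in> {..<l}"
          show "(if q \<sigma>1 \<tau>1 x = p n then 1 else 0) = 0"
          proof (cases "x < n")
            case True then show ?thesis using qp p_inj[of x n] nl by auto
          next
            case False then show ?thesis using below[of x] \<open>x \<in> {..<l}\<close> irr[of "p n"] by auto
          qed
        qed
        then have b: "Poly_Mapping.lookup (Lm \<sigma>1 \<tau>1) (p n) = 0" by (simp add: lookup_Lm)
        show "Poly_Mapping.lookup (Lm \<sigma>1 \<tau>1) (p n) < Poly_Mapping.lookup LL (p n)" using a b by simp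
      next
        fix y assume gy: "gt y (p n)"
        have "(if p x = y then 1 else 0::nat) = (if q \<sigma>1 \<tau>1 x = y then 1 else 0)" if "x \<in> {..<l}" for x
        proof (cases "x < n")
          case True then show ?thesis using qp by simp
        next
          case False
          then have nx: "n \<le> x" by simp
          have "p n = p x \<or> gt (p n) (p x)" using p_gt[of n x] that nx by (cases "n = x") auto
          then have 1: "p x \<noteq> y" using ge_ne[OF gy] by blast
          have "q \<sigma>1 \<tau>1 x \<noteq> y" using ge_ne[OF gy] below[OF nx] that by blast
          then show ?thesis using 1 by simp
        qed
        then show "Poly_Mapping.lookup LL y = Poly_Mapping.lookup (Lm \<sigma>1 \<tau>1) y"
          unfolding lookup_LL lookup_Lm by (intro sum.cong) auto
      qed
      moreover have "lex_gt gt (Lm \<sigma>1 \<tau>1) LL" using g L1 by simp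
      ultimately show False using lex_asym_Lm[OF s1 t1 idS(1) idS(2)] Lm_id by simp
    qed
    then obtain i where ni: "n \<le> i" and il: "i < l" and qi: "q \<sigma>1 \<tau>1 i = p n" by blast
    have cond: "(\<sigma>1 i = n \<or> \<sigma>1 n = n) \<and> (\<tau>1 i = n \<or> \<tau>1 n = n)"
      using bound[OF nv s1 t1 f1 ni il] qi irr by auto
    define \<sigma>' where "\<sigma>' = (if \<sigma>1 i = n then \<sigma>1 \<circ> Transposition.transpose n i else \<sigma>1)"
    define \<tau>' where "\<tau>' = (if \<tau>1 i = n then \<tau>1 \<circ> Transposition.transpose n i else \<tau>1)"
    have sw: "\<sigma>' permutes SM \<and> \<tau>' permutes SN \<and> \<sigma>' n = n \<and> \<tau>' n = n \<and>
      (\<forall>x. x \<noteq> n \<longrightarrow> x \<noteq> i \<longrightarrow> \<sigma>' x = \<sigma>1 x \<and> \<tau>' x = \<tau>1 x) \<and>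
      (\<Sum>x<l. Poly_Mapping.single (q \<sigma>' \<tau>' x) (1::nat)) = (\<Sum>x<l. Poly_Mapping.single (q \<sigma>1 \<tau>1 x) 1)"
      unfolding \<sigma>'_def \<tau>'_def using swap[OF s1 t1 nl il qi] cond by blast
    have "Lm \<sigma>' \<tau>' = Lm \<sigma> \<tau>" using sw L1 by (simp add: Lm_def)
    moreover have "\<forall>t<Suc n. \<sigma>' t = t \<and> \<tau>' t = t"
    proof (intro allI impI)
      fix x assume "x < Suc n"
      show "\<sigma>' x = x \<and> \<tau>' x = x"
      proof (cases "x = n")
        case True then show ?thesis using sw by simp
      next
        case False
        then have "x < n" "x \<noteq> i" using \<open>x < Suc n\<close> ni by auto
        then show ?thesis using sw f1 False by simp
      qed
    qed
    ultimately show ?case using sw by blast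
  qed
  obtain \<sigma>2 \<tau>2 where s2: "\<sigma>2 permutes SM" and t2: "\<tau>2 permutes SN" and L2: "Lm \<sigma>2 \<tau>2 = Lm \<sigma> \<tau>"
    and f2: "\<forall>t<l. \<sigma>2 t = t \<and> \<tau>2 t = t"
    using main[of l] by auto
  have "\<sigma>2 = id"
  proof
    fix x show "\<sigma>2 x = id x"
      using f2 perm_out[OF s2, of x] SM_l by (cases "x < l") auto
  qed
  moreover have "\<tau>2 = id"
  proof
    fix x show "\<tau>2 x = id x"
      using f2 perm_out[OF t2, of x] SN_l by (cases "x < l") auto
  qed
  ultimately have "Lm \<sigma> \<tau> = LL" using L2 Lm_id by simp
  then show False using g unfolding lex_gt_def by auto
qed

lemma V_mix: "a < l \<Longrightarrow> b < l \<Longrightarrow> rr a = R \<Longrightarrow> rr b = R \<Longrightarrow> V (\<alpha> a, \<beta> b, R)"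
  using Vp[of a] Vp[of b] by (auto simp: p_def Vdef)

lemma thmB_fwd:
  assumes viol
  shows "\<exists>\<sigma> \<tau>. \<sigma> permutes SM \<and> \<tau> permutes SN \<and> lex_gt gt (Lm \<sigma> \<tau>) LL"
proof -
  obtain i j k where iM: "i \<in> SM" and jN: "j \<in> SN" and kM: "k \<in> SM" and kN: "k \<in> SN"
    and ij: "i \<noteq> j" and ik: "i \<noteq> k" and jk: "j \<noteq> k"
    and r1: "rr i = rr j" and r2: "rr j = rr k" and a1: "\<alpha> i < \<alpha> j" and a2: "\<alpha> j < \<alpha> k"
    and b1: "\<beta> j < \<beta> i" and b2: "\<beta> i < \<beta> k"
    using assms unfolding viol_def by blast
  define R where "R = rr k"
  have ri: "rr i = R" and rj: "rr j = R" and rk: "rr k = R" using r1 r2 R_def by auto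
  have il: "i < l" and jl: "j < l" and kl: "k < l" using SM_l[OF iM] SN_l[OF jN] SM_l[OF kM] by auto
  define \<sigma> where "\<sigma> = Transposition.transpose i k"
  define \<tau> where "\<tau> = Transposition.transpose j k"
  have s: "\<sigma> permutes SM" unfolding \<sigma>_def by (rule permutes_swap_id[OF iM kM])
  have t: "\<tau> permutes SN" unfolding \<tau>_def by (rule permutes_swap_id[OF jN kN])
  define x where "x = (\<alpha> i, \<beta> j, R)"
  have tg: "tgt R = tgt R" by simp
  have mono: "x = (\<alpha> a, \<beta> b, R) \<or> gt x (\<alpha> a, \<beta> b, R)"
    if "a < l" "b < l" "rr a = R" "rr b = R" "\<alpha> i \<le> \<alpha> a" "\<beta> j \<le> \<beta> b" for a b
    unfolding x_def
    using Tmono[OF V_mix[OF il jl ri rj] V_mix[OF that(1-4)] tg that(5)] that(6) by simp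
  have qk: "q \<sigma> \<tau> k = x" unfolding q_def \<sigma>_def \<tau>_def x_def using rk by simp
  have qi: "q \<sigma> \<tau> i = (\<alpha> k, \<beta> i, R)" unfolding q_def \<sigma>_def \<tau>_def using ri ij ik by simp
  have qj: "q \<sigma> \<tau> j = (\<alpha> j, \<beta> k, R)" unfolding q_def \<sigma>_def \<tau>_def using rj ij jk by simp
  have qo: "q \<sigma> \<tau> t = p t" if "t \<noteq> i" "t \<noteq> j" "t \<noteq> k" for t
    unfolding q_def p_def \<sigma>_def \<tau>_def using that by simp
  have "lex_gt gt (Lm \<sigma> \<tau>) LL"
    unfolding lex_gt_def
  proof (intro exI[of _ x] conjI allI impI)
    have "(\<Sum>t<l. if p t = x then 1 else 0::nat) = 0"
    proof (rule sum.neutral, rule ballI)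
      fix t assume "t \<in> {..<l}"
      then have "t \<in> SM \<or> t \<in> SN" using cover by auto
      moreover have "p t \<noteq> x" if "t \<in> SM"
        using SM_a_inj[OF that iM] b1 by (auto simp: p_def x_def)
      moreover have "p t \<noteq> x" if "t \<in> SN"
        using SN_b_inj[OF that jN] a1 by (auto simp: p_def x_def)
      ultimately show "(if p t = x then 1 else 0) = 0" by auto
    qed
    then have a: "Poly_Mapping.lookup LL x = 0" by (simp add: lookup_LL)
    have "(if q \<sigma> \<tau> k = x then 1 else 0::nat) \<le> (\<Sum>t<l. if q \<sigma> \<tau> t = x then 1 else 0)"
      by (rule member_le_sum) (use kl in auto)
    then have b: "Poly_Mapping.lookup (Lm \<sigma> \<tau>) x \<ge> 1" using qk by (simp add: lookup_Lm)
    show "Poly_Mapping.lookup LL x < Poly_Mapping.lookup (Lm \<sigma> \<tau>) x" using a b by simp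
  next
    fix y assume gy: "gt y x"
    have pi: "p i \<noteq> y" using ge_ne[OF gy mono[OF il il ri ri order.refl order.strict_implies_order[OF b1]]] ri
      by (simp add: p_def)
    have pj: "p j \<noteq> y" using ge_ne[OF gy mono[OF jl jl rj rj order.strict_implies_order[OF a1] order.refl]] rj
      by (simp add: p_def)
    have pk: "p k \<noteq> y" using ge_ne[OF gy mono[OF kl kl rk rk _ _]] rk a1 a2 b1 b2
      by (simp add: p_def)
    have qi': "q \<sigma> \<tau> i \<noteq> y" using ge_ne[OF gy mono[OF kl il rk ri _ _]] qi a1 a2 b1 b2 by simp
    have qj': "q \<sigma> \<tau> j \<noteq> y" using ge_ne[OF gy mono[OF jl kl rj rk _ _]] qj a1 a2 b1 b2 by simp
    have qk': "q \<sigma> \<tau> k \<noteq> y" using qk gy irr[of y] by auto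
    have "(if p t = y then 1 else 0::nat) = (if q \<sigma> \<tau> t = y then 1 else 0)" if "t \<in> {..<l}" for t
      using qo[of t] pi pj pk qi' qj' qk' by (cases "t = i \<or> t = j \<or> t = k") auto
    then show "Poly_Mapping.lookup (Lm \<sigma> \<tau>) y = Poly_Mapping.lookup LL y"
      unfolding lookup_LL lookup_Lm by (intro sum.cong) auto
  qed
  then show ?thesis using s t by blast
qed

end



lemma cnt_mset: "count (image_mset f (mset_set {..<(l::nat)})) y = (\<Sum>t<l. if f t = y then 1 else 0)"
  by (induction l) (auto simp: lessThan_Suc)

lemma rr_pres:
  fixes \<pi> c rr :: "nat \<Rightarrow> nat"
  assumes X: "X \<subseteq> {..<l}" and \<pi>: "\<pi> permutes X"
    and cinj: "\<And>s t. s \<in> X \<Longrightarrow> t \<in> X \<Longrightarrow> c s = c t \<Longrightarrow> s = t"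
    and E: "image_mset (\<lambda>t. (c (\<pi> t), rr t)) (mset_set {..<l}) = image_mset (\<lambda>t. (c t, rr t)) (mset_set {..<l})"
  shows "\<forall>i\<in>X. rr (\<pi> i) = rr i"
proof -
  have fin: "finite X" using X finite_subset by blast
  have un: "{..<l} = X \<union> ({..<l} - X)" using X by blast
  have split: "mset_set {..<l} = mset_set X + mset_set ({..<l} - X)"
    by (subst un, rule mset_set_Union) (use fin in auto)
  have out: "image_mset (\<lambda>t. (c (\<pi> t), rr t)) (mset_set ({..<l} - X)) =
             image_mset (\<lambda>t. (c t, rr t)) (mset_set ({..<l} - X))"
    by (rule image_mset_cong) (use \<pi> in \<open>auto simp: permutes_not_in\<close>)
  have E1: "image_mset (\<lambda>t. (c (\<pi> t), rr t)) (mset_set X) = image_mset (\<lambda>t. (c t, rr t)) (mset_set X)"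
    using E out unfolding split by simp
  have pm: "image_mset \<pi> (mset_set X) = mset_set X"
    using image_mset_mset_set[of \<pi> X] permutes_inj_on[OF \<pi>] permutes_image[OF \<pi>] by simp
  have E2: "image_mset (\<lambda>t. (c t, rr t)) (mset_set X) = image_mset (\<lambda>t. (c (\<pi> t), rr (\<pi> t))) (mset_set X)"
  proof -
    have "image_mset (\<lambda>t. (c t, rr t)) (mset_set X) = image_mset (\<lambda>t. (c t, rr t)) (image_mset \<pi> (mset_set X))"
      using pm by simp
    also have "\<dots> = image_mset (\<lambda>t. (c (\<pi> t), rr (\<pi> t))) (mset_set X)"
      by (simp add: multiset.map_comp comp_def)
    finally show ?thesis .
  qed
  show ?thesis
  proof
    fix i assume i: "i \<in> X"
    have "(c (\<pi> i), rr i) \<in># image_mset (\<lambda>t. (c (\<pi> t), rr t)) (mset_set X)" using i fin by simp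
    then have "(c (\<pi> i), rr i) \<in># image_mset (\<lambda>t. (c (\<pi> t), rr (\<pi> t))) (mset_set X)" using E1 E2 by simp
    then obtain t where t: "t \<in> X" "c (\<pi> i) = c (\<pi> t)" "rr i = rr (\<pi> t)" using fin by auto
    have "\<pi> i \<in> X" "\<pi> t \<in> X" using i t(1) \<pi> by (simp_all add: permutes_in_image)
    then have "\<pi> i = \<pi> t" using cinj t(2) by blast
    then have "i = t" using permutes_inj[OF \<pi>] by (meson injD)
    then show "rr (\<pi> i) = rr i" using t(3) by simp
  qed
qed

context core
begin

lemma thmA_rev:
  assumes "\<sigma> permutes (SM \<inter> SN)" "\<forall>i<l. rr (\<sigma> i) = rr i"
  shows "Lm \<sigma> \<sigma> = LL"
proof -
  have sl: "\<sigma> permutes {..<l}" using permutes_subset[OF assms(1)] SM_sub by blast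
  have "Lm \<sigma> \<sigma> = (\<Sum>x<l. Poly_Mapping.single (p (\<sigma> x)) (1::nat))"
    unfolding Lm_def by (rule sum.cong) (use assms(2) in \<open>auto simp: p_def q_def\<close>)
  also have "\<dots> = LL"
    unfolding LL_def using sum.permute[OF sl, of "\<lambda>x. Poly_Mapping.single (p x) (1::nat)"] by (simp add: comp_def)
  finally show ?thesis .
qed

lemma thmA_fwd:
  assumes s: "\<sigma> permutes SM" and t: "\<tau> permutes SN" and E: "Lm \<sigma> \<tau> = LL"
  shows "\<sigma> = \<tau> \<and> \<sigma> permutes (SM \<inter> SN) \<and> (\<forall>i<l. rr (\<sigma> i) = rr i)"
proof -
  have step0: "\<exists>t<l. q \<sigma> \<tau> i = p t" if "i < l" for i
  proof -
    have "Poly_Mapping.lookup (Lm \<sigma> \<tau>) (q \<sigma> \<tau> i) \<noteq> 0"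
      unfolding lookup_Lm using that by (auto simp: sum_eq_0_iff)
    then have "(\<Sum>x<l. if p x = q \<sigma> \<tau> i then 1 else 0::nat) \<noteq> 0" using E by (simp add: lookup_LL)
    then show ?thesis by (auto simp: sum_eq_0_iff split: if_splits)
  qed
  have ms: "image_mset (q \<sigma> \<tau>) (mset_set {..<l}) = image_mset p (mset_set {..<l})"
  proof (rule multiset_eqI)
    fix y
    have "Poly_Mapping.lookup (Lm \<sigma> \<tau>) y = Poly_Mapping.lookup LL y" using E by simp
    then show "count (image_mset (q \<sigma> \<tau>) (mset_set {..<l})) y = count (image_mset p (mset_set {..<l})) y"
      by (simp add: cnt_mset lookup_Lm lookup_LL)
  qed
  have msa: "image_mset (\<lambda>t. (\<alpha> (\<sigma> t), rr t)) (mset_set {..<l}) = image_mset (\<lambda>t. (\<alpha> t, rr t)) (mset_set {..<l})"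
  proof -
    have "image_mset (\<lambda>v. (fst v, snd (snd v))) (image_mset (q \<sigma> \<tau>) (mset_set {..<l})) =
          image_mset (\<lambda>v. (fst v, snd (snd v))) (image_mset p (mset_set {..<l}))" using ms by simp
    then show ?thesis by (simp add: multiset.map_comp comp_def q_def p_def)
  qed
  have msb: "image_mset (\<lambda>t. (\<beta> (\<tau> t), rr t)) (mset_set {..<l}) = image_mset (\<lambda>t. (\<beta> t, rr t)) (mset_set {..<l})"
  proof -
    have "image_mset (\<lambda>v. (fst (snd v), snd (snd v))) (image_mset (q \<sigma> \<tau>) (mset_set {..<l})) =
          image_mset (\<lambda>v. (fst (snd v), snd (snd v))) (image_mset p (mset_set {..<l}))" using ms by simp
    then show ?thesis by (simp add: multiset.map_comp comp_def q_def p_def)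
  qed
  have st1: "\<forall>i\<in>SM. rr (\<sigma> i) = rr i" by (rule rr_pres[OF SM_sub s SM_a_inj msa])
  have st1': "\<forall>i\<in>SN. rr (\<tau> i) = rr i" by (rule rr_pres[OF SN_sub t SN_b_inj msb])
  have rs: "rr (\<sigma> i) = rr i" for i using st1 perm_out[OF s, of i] by (cases "i \<in> SM") auto
  have rt: "rr (\<tau> i) = rr i" for i using st1' perm_out[OF t, of i] by (cases "i \<in> SN") auto
  have st2: "\<sigma> i = i" if iM: "i \<in> SM" and iN: "i \<notin> SN" for i
  proof (rule ccontr)
    assume mv: "\<sigma> i \<noteq> i"
    define k where "k = rr i"
    define W where "W = {t. t \<in> SM \<and> t \<notin> SN \<and> \<sigma> t \<noteq> t \<and> rr t = k}"
    have iW: "i \<in> W" using iM iN mv k_def W_def by simp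
    have finW: "finite W" using SM_sub W_def finite_subset[of W "{..<l}"] by auto
    have a2: "\<exists>t'. t' \<in> SN \<and> t' \<notin> SM \<and> \<alpha> t' = \<alpha> (\<sigma> t) \<and> \<beta> t' = \<beta> t \<and> rr t' = k" if tW: "t \<in> W" for t
    proof -
      have tM: "t \<in> SM" and tN: "t \<notin> SN" and tm: "\<sigma> t \<noteq> t" and tk: "rr t = k" using tW W_def by auto
      obtain t' where t'l: "t' < l" and e: "q \<sigma> \<tau> t = p t'" using step0 SM_l[OF tM] by blast
      have tt: "\<tau> t = t" using perm_out[OF t tN] .
      have e2: "\<alpha> t' = \<alpha> (\<sigma> t)" "\<beta> t' = \<beta> t" "rr t' = k" using e tt tk by (auto simp: p_def q_def)
      have "t' \<notin> SM"
      proof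
        assume t'M: "t' \<in> SM"
        then have "t' = t" using SM_c_inj[OF t'M tM] e2 tk by simp
        then have "\<alpha> t = \<alpha> (\<sigma> t)" using e2 by simp
        then show False using SM_a_inj[OF tM perm_in[OF s tM]] tm by simp
      qed
      then have "t' \<in> SN" using cover t'l by blast
      then show ?thesis using \<open>t' \<notin> SM\<close> e2 by blast
    qed
    have sub: "\<sigma> ` W \<subseteq> W"
    proof
      fix y assume "y \<in> \<sigma> ` W"
      then obtain t where tW: "t \<in> W" and y: "y = \<sigma> t" by blast
      have tM: "t \<in> SM" and tm: "\<sigma> t \<noteq> t" and tk: "rr t = k" using tW W_def by auto
      have yM: "y \<in> SM" using perm_in[OF s tM] y by simp
      have ym: "\<sigma> y \<noteq> y" using tm perm_inj[OF s, of "\<sigma> t" t] y by auto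
      have yk: "rr y = k" using rs tk y by simp
      obtain t' where t': "t' \<in> SN" "t' \<notin> SM" "\<alpha> t' = \<alpha> (\<sigma> t)" "\<beta> t' = \<beta> t" "rr t' = k" using a2[OF tW] by blast
      have "y \<notin> SN"
      proof
        assume yN: "y \<in> SN"
        then have "t' = y" using SN_r_inj[OF t'(1) yN] t' yk y by simp
        then show False using t'(2) yM by simp
      qed
      then show "y \<in> W" using yM ym yk W_def by simp
    qed
    have injW: "inj_on \<sigma> W" using permutes_inj_on[OF s] .
    have eqW: "\<sigma> ` W = W" using endo_inj_surj[OF finW sub injW] .
    define i1 where "i1 = Max W"
    have i1W: "i1 \<in> W" using Max_in[OF finW] iW i1_def by blast
    have maxW: "x \<le> i1" if "x \<in> W" for x using Max_ge[OF finW that] i1_def by simp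
    have si1W: "\<sigma> i1 \<in> W" using sub i1W by blast
    have si1ne: "\<sigma> i1 \<noteq> i1" using i1W W_def by simp
    have lt1: "\<sigma> i1 < i1" using maxW[OF si1W] si1ne by simp
    obtain i' where i'W: "i' \<in> W" and si': "\<sigma> i' = i1" using eqW i1W by (metis imageE)
    have "i' \<noteq> i1" using si' si1ne by auto
    then have lt2: "i' < i1" using maxW[OF i'W] by simp
    have i1M: "i1 \<in> SM" and i1k: "rr i1 = k" using i1W W_def by auto
    have i'M: "i' \<in> SM" and i'k: "rr i' = k" using i'W W_def by auto
    have si1M: "\<sigma> i1 \<in> SM" using si1W W_def by simp
    have ia: "\<alpha> (\<sigma> i1) < \<alpha> i1" using SM_chain[OF si1M i1M lt1] by simp
    have ib: "\<beta> i' < \<beta> i1" using SM_chain[OF i'M i1M lt2] i1k i'k by simp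
    obtain t1 where t1: "t1 \<in> SN" "\<alpha> t1 = \<alpha> (\<sigma> i1)" "\<beta> t1 = \<beta> i1" "rr t1 = k" using a2[OF i1W] by blast
    obtain t2 where t2: "t2 \<in> SN" "\<alpha> t2 = \<alpha> (\<sigma> i')" "\<beta> t2 = \<beta> i'" "rr t2 = k" using a2[OF i'W] by blast
    have t2a: "\<alpha> t2 = \<alpha> i1" using t2(2) si' by simp
    show False
    proof (cases t1 t2 rule: linorder_cases)
      case less then show ?thesis using SN_chain[OF t1(1) t2(1) less] t1 t2 ib by simp
    next
      case equal then show ?thesis using t1 t2a ia by simp
    next
      case greater then show ?thesis using SN_chain[OF t2(1) t1(1) greater] t1 t2 t2a ia by simp
    qed
  qed
  have st2': "\<tau> i = i" if iN: "i \<in> SN" and iM: "i \<notin> SM" for i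
  proof (rule ccontr)
    assume mv: "\<tau> i \<noteq> i"
    define k where "k = rr i"
    define W where "W = {t. t \<in> SN \<and> t \<notin> SM \<and> \<tau> t \<noteq> t \<and> rr t = k}"
    have iW: "i \<in> W" using iM iN mv k_def W_def by simp
    have finW: "finite W" using SN_sub W_def finite_subset[of W "{..<l}"] by auto
    have a2: "\<exists>t'. t' \<in> SM \<and> t' \<notin> SN \<and> \<alpha> t' = \<alpha> t \<and> \<beta> t' = \<beta> (\<tau> t) \<and> rr t' = k" if tW: "t \<in> W" for t
    proof -
      have tN: "t \<in> SN" and tM: "t \<notin> SM" and tm: "\<tau> t \<noteq> t" and tk: "rr t = k" using tW W_def by auto
      obtain t' where t'l: "t' < l" and e: "q \<sigma> \<tau> t = p t'" using step0 SN_l[OF tN] by blast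
      have ss: "\<sigma> t = t" using perm_out[OF s tM] .
      have e2: "\<alpha> t' = \<alpha> t" "\<beta> t' = \<beta> (\<tau> t)" "rr t' = k" using e ss tk by (auto simp: p_def q_def)
      have "t' \<notin> SN"
      proof
        assume t'N: "t' \<in> SN"
        then have "t' = t" using SN_r_inj[OF t'N tN] e2 tk by simp
        then have "\<beta> t = \<beta> (\<tau> t)" using e2 by simp
        then show False using SN_b_inj[OF tN perm_in[OF t tN]] tm by simp
      qed
      then have "t' \<in> SM" using cover t'l by blast
      then show ?thesis using \<open>t' \<notin> SN\<close> e2 by blast
    qed
    have sub: "\<tau> ` W \<subseteq> W"
    proof
      fix y assume "y \<in> \<tau> ` W"
      then obtain t where tW: "t \<in> W" and y: "y = \<tau> t" by blast
      have tN: "t \<in> SN" and tm: "\<tau> t \<noteq> t" and tk: "rr t = k" using tW W_def by auto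
      have yN: "y \<in> SN" using perm_in[OF t tN] y by simp
      have ym: "\<tau> y \<noteq> y" using tm perm_inj[OF t, of "\<tau> t" t] y by auto
      have yk: "rr y = k" using rt tk y by simp
      obtain t' where t': "t' \<in> SM" "t' \<notin> SN" "\<alpha> t' = \<alpha> t" "\<beta> t' = \<beta> (\<tau> t)" "rr t' = k" using a2[OF tW] by blast
      have "y \<notin> SM"
      proof
        assume yM: "y \<in> SM"
        then have "t' = y" using SM_c_inj[OF t'(1) yM] t' yk y by simp
        then show False using t'(2) yN by simp
      qed
      then show "y \<in> W" using yN ym yk W_def by simp
    qed
    have injW: "inj_on \<tau> W" using permutes_inj_on[OF t] .
    have eqW: "\<tau> ` W = W" using endo_inj_surj[OF finW sub injW] .
    define i1 where "i1 = Max W"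
    have i1W: "i1 \<in> W" using Max_in[OF finW] iW i1_def by blast
    have maxW: "x \<le> i1" if "x \<in> W" for x using Max_ge[OF finW that] i1_def by simp
    have ti1W: "\<tau> i1 \<in> W" using sub i1W by blast
    have ti1ne: "\<tau> i1 \<noteq> i1" using i1W W_def by simp
    have lt1: "\<tau> i1 < i1" using maxW[OF ti1W] ti1ne by simp
    obtain i' where i'W: "i' \<in> W" and ti': "\<tau> i' = i1" using eqW i1W by (metis imageE)
    have "i' \<noteq> i1" using ti' ti1ne by auto
    then have lt2: "i' < i1" using maxW[OF i'W] by simp
    have i1N: "i1 \<in> SN" and i1k: "rr i1 = k" using i1W W_def by auto
    have i'N: "i' \<in> SN" and i'k: "rr i' = k" using i'W W_def by auto
    have ti1N: "\<tau> i1 \<in> SN" using ti1W W_def by simp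
    have ib: "\<beta> (\<tau> i1) < \<beta> i1" using SN_chain[OF ti1N i1N lt1] by simp
    have ia: "\<alpha> i' < \<alpha> i1" using SN_chain[OF i'N i1N lt2] i1k i'k by simp
    obtain t1 where t1: "t1 \<in> SM" "\<alpha> t1 = \<alpha> i1" "\<beta> t1 = \<beta> (\<tau> i1)" "rr t1 = k" using a2[OF i1W] by blast
    obtain t2 where t2: "t2 \<in> SM" "\<alpha> t2 = \<alpha> i'" "\<beta> t2 = \<beta> (\<tau> i')" "rr t2 = k" using a2[OF i'W] by blast
    have t2b: "\<beta> t2 = \<beta> i1" using t2(3) ti' by simp
    show False
    proof (cases t1 t2 rule: linorder_cases)
      case less then show ?thesis using SM_chain[OF t1(1) t2(1) less] t1 t2 ia by simp
    next
      case equal then show ?thesis using t1 t2b ib by simp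
    next
      case greater then show ?thesis using SM_chain[OF t2(1) t1(1) greater] t1 t2 t2b ib by simp
    qed
  qed
  have st3: "\<sigma> i = \<tau> i" if iM: "i \<in> SM" and iN: "i \<in> SN" for i
  proof -
    obtain t' where t'l: "t' < l" and e: "q \<sigma> \<tau> i = p t'" using step0 SM_l[OF iM] by blast
    have e2: "\<alpha> (\<sigma> i) = \<alpha> t'" "\<beta> (\<tau> i) = \<beta> t'" using e by (auto simp: p_def q_def)
    have siM: "\<sigma> i \<in> SM" using perm_in[OF s iM] .
    have tiN: "\<tau> i \<in> SN" using perm_in[OF t iN] .
    show ?thesis
    proof (cases "t' \<in> SM")
      case True
      then have st: "\<sigma> i = t'" using SM_a_inj[OF siM True] e2 by simp
      have "\<sigma> i \<in> SN"
      proof (rule ccontr)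
        assume "\<sigma> i \<notin> SN"
        then have "\<sigma> (\<sigma> i) = \<sigma> i" using st2[OF siM] by simp
        then have "\<sigma> i = i" using perm_inj[OF s] by blast
        then show False using \<open>\<sigma> i \<notin> SN\<close> iN by simp
      qed
      then have "\<tau> i = t'" using SN_b_inj[OF tiN] e2 st by simp
      then show ?thesis using st by simp
    next
      case False
      then have t'N: "t' \<in> SN" using cover t'l by blast
      then have tt: "\<tau> i = t'" using SN_b_inj[OF tiN t'N] e2 by simp
      have "\<tau> i \<in> SM"
      proof (rule ccontr)
        assume "\<tau> i \<notin> SM"
        then have "\<tau> (\<tau> i) = \<tau> i" using st2'[OF tiN] by simp
        then have "\<tau> i = i" using perm_inj[OF t] by blast
        then show False using \<open>\<tau> i \<notin> SM\<close> iM by simp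
      qed
      then have "\<sigma> i = \<tau> i" using SM_a_inj[OF siM] e2 tt by simp
      then show ?thesis .
    qed
  qed
  have eq: "\<sigma> = \<tau>"
  proof
    fix x
    show "\<sigma> x = \<tau> x"
    proof (cases "x \<in> SM")
      case True
      then show ?thesis
      proof (cases "x \<in> SN")
        case True then show ?thesis using st3 \<open>x \<in> SM\<close> by simp
      next
        case False then show ?thesis using st2 \<open>x \<in> SM\<close> perm_out[OF t False] by simp
      qed
    next
      case False
      then show ?thesis
      proof (cases "x \<in> SN")
        case True then show ?thesis using st2' \<open>x \<notin> SM\<close> perm_out[OF s False] by simp
      next
        case nN: False then show ?thesis using perm_out[OF s False] perm_out[OF t nN] by simp
      qed
    qed
  qed
  have "\<sigma> permutes (SM \<inter> SN)"
    unfolding permutes_def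
  proof (intro conjI allI impI)
    fix x assume "x \<notin> SM \<inter> SN"
    then show "\<sigma> x = x" using st2 perm_out[OF s] by (cases "x \<in> SM") auto
  next
    fix y show "\<exists>!x. \<sigma> x = y" using s unfolding permutes_def by blast
  qed
  then show ?thesis using eq rs by simp
qed

end



lemma sorted_le_nth:
  assumes "sorted_wrt P xs" "i \<le> j" "j < length xs"
  shows "xs ! i = xs ! j \<or> P (xs ! i) (xs ! j)"
  using assms sorted_wrt_nth_less[of P xs i j] by (cases "i = j") auto

lemma sorted_inj_nth:
  assumes "sorted_wrt P xs" "\<And>x. \<not> P x x" "i < length xs" "j < length xs" "xs ! i = xs ! j"
  shows "i = j"
proof (rule ccontr)
  assume "i \<noteq> j"
  then consider "i < j" | "j < i" by linarith
  then show False
  proof cases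
    case 1 then show ?thesis using sorted_wrt_nth_less[OF assms(1) 1 assms(4)] assms(2,5) by simp
  next
    case 2 then show ?thesis using sorted_wrt_nth_less[OF assms(1) 2 assms(3)] assms(2,5) by simp
  qed
qed

lemma lookup_mono_lcm:
  "Poly_Mapping.lookup (mono_lcm a b) x = max (Poly_Mapping.lookup a x) (Poly_Mapping.lookup b x)"
proof -
  have "{x. max (Poly_Mapping.lookup a x) (Poly_Mapping.lookup b x) \<noteq> 0} \<subseteq>
        {x. Poly_Mapping.lookup a x \<noteq> 0} \<union> {x. Poly_Mapping.lookup b x \<noteq> 0}" by auto
  then have "finite {x. max (Poly_Mapping.lookup a x) (Poly_Mapping.lookup b x) \<noteq> 0}"
    by (rule finite_subset) simp
  then show ?thesis unfolding mono_lcm_def by simp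
qed

lemma lookup_monoP_pos:
  "0 < Poly_Mapping.lookup (monoP u ent id) x \<longleftrightarrow> (\<exists>i<u. ent i i = x)"
  unfolding lookup_monoP zero_less_iff_neq_zero by (auto simp: sum_eq_0_iff split: if_splits)

lemma pl_irr: "\<not> pair_less x x" by (simp add: pair_less_def)

theorem proposition2p13:
  fixes r :: nat and src tgt :: "nat \<Rightarrow> 'v" and m :: "'v \<Rightarrow> nat"
    and gt :: "var \<Rightarrow> var \<Rightarrow> bool"
    and h :: nat and u v :: nat
    and RM :: "nat list" and CM :: "(nat \<times> nat) list" and M :: "'k::field mpoly"
    and RN :: "(nat \<times> nat) list" and CN :: "nat list" and N :: "'k mpoly"
    and ps :: "var list" and l :: nat
    and SM SN :: "nat set" and \<alpha> \<beta> rr :: "nat \<Rightarrow> nat"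
    and Lst :: "(nat \<Rightarrow> nat) \<Rightarrow> (nat \<Rightarrow> nat) \<Rightarrow> mono"
  assumes bipartite: "\<forall>k < r. \<forall>k' < r. tgt k \<noteq> src k'"
    and order: "consistent_order r src tgt m gt"
    and arrow: "h < r"
    and uv: "0 < u" "0 < v"
    and M_minor: "sink_minor r src tgt m (tgt h) u RM CM M"
    and N_minor: "source_minor r src tgt m (src h) v RN CN N"
    and l_def: "l = length ps"
    and ps_sorted: "sorted_wrt gt ps"
    and L_eq: "mono_lcm (LM gt M) (LM gt N) = (\<Sum>i<l. Poly_Mapping.single (ps ! i) 1)"
    and \<alpha>_def: "\<alpha> = (\<lambda>i. fst (ps ! i))"
    and \<beta>_def: "\<beta> = (\<lambda>i. fst (snd (ps ! i)))"
    and rr_def: "rr = (\<lambda>i. snd (snd (ps ! i)))"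
    and SM_def: "SM = {i. i < l \<and> 0 < Poly_Mapping.lookup (LM gt M) (ps ! i)}"
    and SN_def: "SN = {i. i < l \<and> 0 < Poly_Mapping.lookup (LM gt N) (ps ! i)}"
    and Lst_def: "Lst = (\<lambda>\<sigma> \<tau>. \<Sum>i<l. Poly_Mapping.single (\<alpha> (\<sigma> i), \<beta> (\<tau> i), rr i) 1)"
  shows "(\<forall>\<sigma> \<tau>. \<sigma> permutes SM \<longrightarrow> \<tau> permutes SN \<longrightarrow>
            (Lst \<sigma> \<tau> = mono_lcm (LM gt M) (LM gt N) \<longleftrightarrow>
             \<sigma> = \<tau> \<and> \<sigma> permutes (SM \<inter> SN) \<and> (\<forall>i < l. rr (\<sigma> i) = rr i)))
       \<and> ((\<exists>i j k. i \<in> SM \<and> j \<in> SN \<and> k \<in> SM \<inter> SN \<and> i \<noteq> j \<and> i \<noteq> k \<and> j \<noteq> k \<and>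
             rr i = rr j \<and> rr j = rr k \<and> \<alpha> i < \<alpha> j \<and> \<alpha> j < \<alpha> k \<and> \<beta> j < \<beta> i \<and> \<beta> i < \<beta> k)
          \<longleftrightarrow> (\<exists>\<sigma> \<tau>. \<sigma> permutes SM \<and> \<tau> permutes SN \<and>
                 lex_gt gt (Lst \<sigma> \<tau>) (mono_lcm (LM gt M) (LM gt N))))"
proof -
  interpret O: ordl r src tgt m gt by unfold_locales (rule order)
  define entM where "entM = (\<lambda>i j. (RM ! i, snd (CM ! j), fst (CM ! j)))"
  define entN where "entN = (\<lambda>i j. (snd (RN ! i), CN ! j, fst (RN ! i)))"
  have Mm: "length RM = u" "length CM = u" "sorted_wrt (<) RM" "sorted_wrt pair_less CM"
     "\<forall>a\<in>set RM. a < m (tgt h)" "\<forall>(k, b)\<in>set CM. k < r \<and> tgt k = tgt h \<and> b < m (src k)"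
     "M = det_var u entM"
    using M_minor unfolding sink_minor_def entM_def by auto
  have Nm: "length RN = v" "length CN = v" "sorted_wrt pair_less RN" "sorted_wrt (<) CN"
     "\<forall>(k, a)\<in>set RN. k < r \<and> src k = src h \<and> a < m (tgt k)" "\<forall>b\<in>set CN. b < m (src h)"
     "N = det_var v entN"
    using N_minor unfolding source_minor_def entN_def by auto
  have CMj: "fst (CM ! j) < r \<and> tgt (fst (CM ! j)) = tgt h \<and> snd (CM ! j) < m (src (fst (CM ! j)))"
    if "j < u" for j
  proof -
    obtain k b where kb: "CM ! j = (k, b)" by (cases "CM ! j")
    have "CM ! j \<in> set CM" using that Mm(2) by simp
    then have "(k, b) \<in> set CM" using kb by simp
    then have "k < r \<and> tgt k = tgt h \<and> b < m (src k)" using Mm(6) by blast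
    then show ?thesis using kb by simp
  qed
  have RNi: "fst (RN ! i) < r \<and> src (fst (RN ! i)) = src h \<and> snd (RN ! i) < m (tgt (fst (RN ! i)))"
    if "i < v" for i
  proof -
    obtain k a where ka: "RN ! i = (k, a)" by (cases "RN ! i")
    have "RN ! i \<in> set RN" using that Nm(1) by simp
    then have "(k, a) \<in> set RN" using ka by simp
    then have "k < r \<and> src k = src h \<and> a < m (tgt k)" using Nm(5) by blast
    then show ?thesis using ka by simp
  qed
  have valM: "O.V (entM i j)" if "i < u" "j < u" for i j
  proof -
    have "RM ! i \<in> set RM" using that Mm(1) by simp
    then have "RM ! i < m (tgt h)" using Mm(5) by blast
    then show ?thesis using CMj[OF that(2)] by (simp add: entM_def valid_var_def)
  qed
  have valN: "O.V (entN i j)" if "i < v" "j < v" for i j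
  proof -
    have "CN ! j \<in> set CN" using that Nm(2) by simp
    then have "CN ! j < m (src h)" using Nm(6) by blast
    then show ?thesis using RNi[OF that(1)] by (simp add: entN_def valid_var_def)
  qed
  have injM: "i = i' \<and> j = j'" if "i < u" "j < u" "i' < u" "j' < u" "entM i j = entM i' j'" for i j i' j'
  proof -
    have "RM ! i = RM ! i'" using that(5) by (simp add: entM_def)
    then have "i = i'" using sorted_inj_nth[OF Mm(3) _ _ _] that Mm(1) by simp
    moreover have "CM ! j = CM ! j'" using that(5) by (simp add: entM_def prod_eq_iff)
    then have "j = j'" using sorted_inj_nth[OF Mm(4) pl_irr] that Mm(2) by simp
    ultimately show ?thesis by simp
  qed
  have injN: "i = i' \<and> j = j'" if "i < v" "j < v" "i' < v" "j' < v" "entN i j = entN i' j'" for i j i' j'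
  proof -
    have "RN ! i = RN ! i'" using that(5) by (simp add: entN_def prod_eq_iff)
    then have "i = i'" using sorted_inj_nth[OF Nm(3) pl_irr] that Nm(1) by simp
    moreover have "CN ! j = CN ! j'" using that(5) by (simp add: entN_def)
    then have "j = j'" using sorted_inj_nth[OF Nm(4) _ _ _] that Nm(2) by simp
    ultimately show ?thesis by simp
  qed
  have monM: "entM i j = entM i' j' \<or> gt (entM i j) (entM i' j')"
    if "i \<le> i'" "j \<le> j'" "i' < u" "j' < u" for i j i' j'
  proof -
    have a: "RM ! i \<le> RM ! i'" using sorted_le_nth[OF Mm(3) that(1)] that(3) Mm(1) by auto
    have c: "fst (CM ! j) < fst (CM ! j') \<or> (fst (CM ! j) = fst (CM ! j') \<and> snd (CM ! j) \<le> snd (CM ! j'))"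
      using sorted_le_nth[OF Mm(4) that(2)] that(4) Mm(2) by (auto simp: pair_less_def)
    have tg: "tgt (fst (CM ! j)) = tgt (fst (CM ! j'))" using CMj that by simp
    have V1: "O.V (RM ! i, snd (CM ! j), fst (CM ! j))" using valM[of i j] that by (simp add: entM_def)
    have V2: "O.V (RM ! i', snd (CM ! j'), fst (CM ! j'))" using valM[of i' j'] that by (simp add: entM_def)
    show ?thesis using O.Tmono[OF V1 V2 tg a c] unfolding entM_def by simp
  qed
  have monN: "entN i j = entN i' j' \<or> gt (entN i j) (entN i' j')"
    if "i \<le> i'" "j \<le> j'" "i' < v" "j' < v" for i j i' j'
  proof -
    have b: "CN ! j \<le> CN ! j'" using sorted_le_nth[OF Nm(4) that(2)] that(4) Nm(2) by auto
    have c: "fst (RN ! i) < fst (RN ! i') \<or> (fst (RN ! i) = fst (RN ! i') \<and> snd (RN ! i) \<le> snd (RN ! i'))"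
      using sorted_le_nth[OF Nm(3) that(1)] that(3) Nm(1) by (auto simp: pair_less_def)
    have sr: "src (fst (RN ! i)) = src (fst (RN ! i'))" using RNi that by simp
    have V1: "O.V (snd (RN ! i), CN ! j, fst (RN ! i))" using valN[of i j] that by (simp add: entN_def)
    have V2: "O.V (snd (RN ! i'), CN ! j', fst (RN ! i'))" using valN[of i' j'] that by (simp add: entN_def)
    show ?thesis using O.Smono[OF V1 V2 sr c b] unfolding entN_def by simp
  qed
  have "LM gt (det_var u entM :: 'k mpoly) = monoP u entM id"
  proof (rule LM_det[where V="valid_var r src tgt m"])
    show "\<not> gt x x" for x by (rule O.irr)
    show "gt x z" if "gt x y" "gt y z" for x y z using O.trans that by blast
    show "gt x y \<or> gt y x" if "O.V x" "O.V y" "x \<noteq> y" for x y using O.tot that by blast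
    show "O.V (entM i j)" if "i < u" "j < u" for i j using valM that by blast
    show "i = i' \<and> j = j'" if "i < u" "j < u" "i' < u" "j' < u" "entM i j = entM i' j'" for i j i' j'
      using injM that by blast
    show "entM i j = entM i' j' \<or> gt (entM i j) (entM i' j')" if "i \<le> i'" "j \<le> j'" "i' < u" "j' < u" for i j i' j'
      using monM that by blast
  qed
  then have LMM: "LM gt M = monoP u entM id" using Mm(7) by simp
  have "LM gt (det_var v entN :: 'k mpoly) = monoP v entN id"
  proof (rule LM_det[where V="valid_var r src tgt m"])
    show "\<not> gt x x" for x by (rule O.irr)
    show "gt x z" if "gt x y" "gt y z" for x y z using O.trans that by blast
    show "gt x y \<or> gt y x" if "O.V x" "O.V y" "x \<noteq> y" for x y using O.tot that by blast
    show "O.V (entN i j)" if "i < v" "j < v" for i j using valN that by blast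
    show "i = i' \<and> j = j'" if "i < v" "j < v" "i' < v" "j' < v" "entN i j = entN i' j'" for i j i' j'
      using injN that by blast
    show "entN i j = entN i' j' \<or> gt (entN i j) (entN i' j')" if "i \<le> i'" "j \<le> j'" "i' < v" "j' < v" for i j i' j'
      using monN that by blast
  qed
  then have LMN: "LM gt N = monoP v entN id" using Nm(7) by simp
  have psi: "ps ! i = (\<alpha> i, \<beta> i, rr i)" for i by (simp add: \<alpha>_def \<beta>_def rr_def)
  have SMc: "SM = {i. i < l \<and> (\<exists>a<u. entM a a = ps ! i)}"
    using SM_def LMM lookup_monoP_pos by simp
  have SNc: "SN = {i. i < l \<and> (\<exists>a<v. entN a a = ps ! i)}"
    using SN_def LMN lookup_monoP_pos by simp
  have gtps: "gt (ps ! s) (ps ! t)" if "s < t" "t < l" for s t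
    using sorted_wrt_nth_less[OF ps_sorted that(1)] that(2) l_def by simp
  interpret C: core r src tgt m gt "tgt h" "src h" l SM SN \<alpha> \<beta> rr
  proof unfold_locales
    show "gt (\<alpha> s, \<beta> s, rr s) (\<alpha> t, \<beta> t, rr t)" if "s < t" "t < l" for s t
      using gtps[OF that] psi by simp
    show "SM \<subseteq> {..<l}" using SM_def by auto
    show "SN \<subseteq> {..<l}" using SN_def by auto
  next
    fix i assume il: "i < l"
    have "(if ps ! i = ps ! i then 1 else 0::nat) \<le> (\<Sum>j<l. if ps ! j = ps ! i then 1 else 0::nat)"
      by (rule member_le_sum) (use il in auto)
    then have "1 \<le> (\<Sum>j<l. if ps ! j = ps ! i then 1 else 0::nat)" by simp
    then have "(\<Sum>j<l. if ps ! j = ps ! i then 1 else 0::nat) \<noteq> 0" by linarith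
    moreover have "Poly_Mapping.lookup (mono_lcm (LM gt M) (LM gt N)) (ps ! i) =
        (\<Sum>j<l. if ps ! j = ps ! i then 1 else 0::nat)"
      unfolding L_eq lookup_sum by (rule sum.cong) (auto simp: lookup_single when_def)
    ultimately have "Poly_Mapping.lookup (mono_lcm (LM gt M) (LM gt N)) (ps ! i) \<noteq> 0" by simp
    then have "0 < Poly_Mapping.lookup (LM gt M) (ps ! i) \<or> 0 < Poly_Mapping.lookup (LM gt N) (ps ! i)"
      by (simp add: lookup_mono_lcm)
    then show "i \<in> SM \<or> i \<in> SN" using il SM_def SN_def by auto
  next
    fix i assume "i \<in> SM"
    then obtain a where a: "a < u" "entM a a = ps ! i" using SMc by auto
    show "O.V (\<alpha> i, \<beta> i, rr i) \<and> tgt (rr i) = tgt h"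
      using valM[OF a(1) a(1)] CMj[OF a(1)] a(2) psi[of i] by (simp add: entM_def)
  next
    fix i assume "i \<in> SN"
    then obtain a where a: "a < v" "entN a a = ps ! i" using SNc by auto
    show "O.V (\<alpha> i, \<beta> i, rr i) \<and> src (rr i) = src h"
      using valN[OF a(1) a(1)] RNi[OF a(1)] a(2) psi[of i] by (simp add: entN_def)
  next
    fix s t assume sM: "s \<in> SM" and tM: "t \<in> SM" and st: "s < t"
    obtain a where a: "a < u" "entM a a = ps ! s" using sM SMc by auto
    obtain b where b: "b < u" "entM b b = ps ! t" using tM SMc by auto
    have tl: "t < l" using tM SM_def by auto
    have g: "gt (ps ! s) (ps ! t)" using gtps[OF st tl] .
    have ab: "a < b"
    proof (rule ccontr)
      assume "\<not> a < b"
      then have "b \<le> a" by simp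
      then have "entM b b = entM a a \<or> gt (entM b b) (entM a a)" using monM[of b a b a] a(1) by simp
      then show False using g a(2) b(2) O.irr[of "ps ! s"] O.asym[of "ps ! s" "ps ! t"] by auto
    qed
    have r1: "RM ! a < RM ! b" using sorted_wrt_nth_less[OF Mm(3) ab] b(1) Mm(1) by simp
    have r2: "pair_less (CM ! a) (CM ! b)" using sorted_wrt_nth_less[OF Mm(4) ab] b(1) Mm(2) by simp
    show "\<alpha> s < \<alpha> t \<and> (rr s < rr t \<or> (rr s = rr t \<and> \<beta> s < \<beta> t))"
      using r1 r2 a(2) b(2) psi[of s] psi[of t] by (auto simp: entM_def pair_less_def)
  next
    fix s t assume sN: "s \<in> SN" and tN: "t \<in> SN" and st: "s < t"
    obtain a where a: "a < v" "entN a a = ps ! s" using sN SNc by auto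
    obtain b where b: "b < v" "entN b b = ps ! t" using tN SNc by auto
    have tl: "t < l" using tN SN_def by auto
    have g: "gt (ps ! s) (ps ! t)" using gtps[OF st tl] .
    have ab: "a < b"
    proof (rule ccontr)
      assume "\<not> a < b"
      then have "b \<le> a" by simp
      then have "entN b b = entN a a \<or> gt (entN b b) (entN a a)" using monN[of b a b a] a(1) by simp
      then show False using g a(2) b(2) O.irr[of "ps ! s"] O.asym[of "ps ! s" "ps ! t"] by auto
    qed
    have r1: "CN ! a < CN ! b" using sorted_wrt_nth_less[OF Nm(4) ab] b(1) Nm(2) by simp
    have r2: "pair_less (RN ! a) (RN ! b)" using sorted_wrt_nth_less[OF Nm(3) ab] b(1) Nm(1) by simp
    show "\<beta> s < \<beta> t \<and> (rr s < rr t \<or> (rr s = rr t \<and> \<alpha> s < \<alpha> t))"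
      using r1 r2 a(2) b(2) psi[of s] psi[of t] by (auto simp: entN_def pair_less_def)
  qed
  have LstC: "Lst \<sigma> \<tau> = C.Lm \<sigma> \<tau>" for \<sigma> \<tau> by (simp add: Lst_def C.Lm_def C.q_def)
  have LC: "mono_lcm (LM gt M) (LM gt N) = C.LL" unfolding L_eq C.LL_def by (simp add: C.p_def psi)
  have partA: "\<forall>\<sigma> \<tau>. \<sigma> permutes SM \<longrightarrow> \<tau> permutes SN \<longrightarrow>
            (Lst \<sigma> \<tau> = mono_lcm (LM gt M) (LM gt N) \<longleftrightarrow>
             \<sigma> = \<tau> \<and> \<sigma> permutes (SM \<inter> SN) \<and> (\<forall>i < l. rr (\<sigma> i) = rr i))"
  proof (intro allI impI)
    fix \<sigma> \<tau> :: "nat \<Rightarrow> nat"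
    assume s: "\<sigma> permutes SM" and t: "\<tau> permutes SN"
    show "Lst \<sigma> \<tau> = mono_lcm (LM gt M) (LM gt N) \<longleftrightarrow>
             \<sigma> = \<tau> \<and> \<sigma> permutes (SM \<inter> SN) \<and> (\<forall>i < l. rr (\<sigma> i) = rr i)"
      unfolding LstC LC
    proof
      assume "C.Lm \<sigma> \<tau> = C.LL"
      then show "\<sigma> = \<tau> \<and> \<sigma> permutes (SM \<inter> SN) \<and> (\<forall>i < l. rr (\<sigma> i) = rr i)"
        by (rule C.thmA_fwd[OF s t])
    next
      assume H: "\<sigma> = \<tau> \<and> \<sigma> permutes (SM \<inter> SN) \<and> (\<forall>i < l. rr (\<sigma> i) = rr i)"
      have "C.Lm \<sigma> \<sigma> = C.LL" using C.thmA_rev[of \<sigma>] H by blast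
      then show "C.Lm \<sigma> \<tau> = C.LL" using H by simp
    qed
  qed
  have partB: "(\<exists>i j k. i \<in> SM \<and> j \<in> SN \<and> k \<in> SM \<inter> SN \<and> i \<noteq> j \<and> i \<noteq> k \<and> j \<noteq> k \<and>
             rr i = rr j \<and> rr j = rr k \<and> \<alpha> i < \<alpha> j \<and> \<alpha> j < \<alpha> k \<and> \<beta> j < \<beta> i \<and> \<beta> i < \<beta> k)
          \<longleftrightarrow> (\<exists>\<sigma> \<tau>. \<sigma> permutes SM \<and> \<tau> permutes SN \<and>
                 lex_gt gt (Lst \<sigma> \<tau>) (mono_lcm (LM gt M) (LM gt N)))"
    unfolding LstC LC C.viol_def[symmetric]
  proof
    assume C.viol
    then show "\<exists>\<sigma> \<tau>. \<sigma> permutes SM \<and> \<tau> permutes SN \<and> lex_gt gt (C.Lm \<sigma> \<tau>) C.LL"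
      by (rule C.thmB_fwd)
  next
    assume "\<exists>\<sigma> \<tau>. \<sigma> permutes SM \<and> \<tau> permutes SN \<and> lex_gt gt (C.Lm \<sigma> \<tau>) C.LL"
    then obtain \<sigma> \<tau> where "\<sigma> permutes SM" "\<tau> permutes SN" "lex_gt gt (C.Lm \<sigma> \<tau>) C.LL" by blast
    then show C.viol by (rule C.thmB_rev)
  qed
  show ?thesis using partA partB by (rule conjI)
qed


end
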